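(* Let $A=\sigma(R)\langle x_1,\dots,x_n\rangle$ be a quasi-commutative bijective $\sigma$-PBW extension of $R$ (under the standing assumptions below). Then every submodule of $A^m$ has a Gröbner basis.
   Context: Let $R\subseteq A$ be rings. $A$ is a $\sigma$-PBW extension of $R$, written $A=\sigma(R)\langle x_1,\dots,x_n\rangle$, if there are $x_1,\dots,x_n\in A\setminus R$ such that: (i) $A$ is a free left $R$-module with basis $\mathrm{Mon}(A)=\{x^\alpha=x_1^{\alpha_1}\cdots x_n^{\alpha_n}:\alpha\in\mathbb N^n\}$, with $x^0=1$; (ii) for every $i$ and every $r\in R\setminus\{0\}$ there is $c_{i,r}\in R\setminus\{0\}$ with $x_ir-c_{i,r}x_i\in R$; (iii) for all $i,j$ there is $c_{i,j}\in R\setminus\{0\}$ with $x_jx_i-c_{i,j}x_ix_j\in R+Rx_1+\dots+Rx_n$. There are injective ring endomorphisms $\sigma_i$ of $R$ and $\sigma_i$-derivations $\delta_i$ with $x_ir=\sigma_i(r)x_i+\delta_i(r)$. Write $\sigma^\alpha=\sigma_1^{\alpha_1}\circ\cdots\circ\sigma_n^{\alpha_n}$ and $|\alpha|=\sum\alpha_i$. For $\alpha,\beta$ there are unique $c_{\alpha,\beta}\in R$ (left invertible) and $p_{\alpha,\beta}\in A$ with $x^\alpha x^\beta=c_{\alpha,\beta}x^{\alpha+\beta}+p_{\alpha,\beta}$, where $p_{\alpha,\beta}=0$ or $\deg p_{\alpha,\beta}<|\alpha+\beta|$. $A$ is quasi-commutative if $x_ir=c_{i,r}x_i$ and $x_jx_i=c_{i,j}x_ix_j$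 exactly. $A$ is bijective if each $\sigma_i$ is bijective and $c_{i,j}$ is invertible for $i<j$. Standing assumptions: $R$ is left Gröbner soluble (left Noetherian; left ideal membership decidable with computable coefficients; finite generating sets of left syzygy modules computable). $\mathrm{Mon}(A)$ carries a monomial order, i.e. a total order $\succeq$ with: (a) $x^\beta\succeq x^\alpha\Rightarrow lm(x^\gamma x^\beta x^\lambda)\succeq lm(x^\gamma x^\alpha x^\lambda)$; (b) $x^\alpha\succeq1$; (c) $|\beta|\ge|\alpha|\Rightarrow x^\beta\succeq x^\alpha$. $A^m$ is the free left $A$-module of column vectors with canonical basis $\mathbf e_i$. Monomials of $A^m$ are $x^\alpha\mathbf e_i$, with $\mathrm{ind}=i$, $\exp=\alpha$, $\deg=|\alpha|$. The monomial $x^\alpha\mathbf e_i$ divides $x^\beta\mathbf e_j$ iff $i=j$ and $\beta_k\ge\alpha_k$ for all $k$. $\mathrm{Mon}(A^m)$ carries a monomial order, i.e. a total order with: (i) $lm(x^\beta x^\alpha)\mathbf e_i\succeq x^\alpha\mathbf e_i$; (ii) $x^\beta\mathbf e_j\succeq x^\alpha\mathbf e_i\Rightarrow lm(x^\gamma x^\beta)\mathbf e_j\succeq lm(x^\gamma x^\alpha)\mathbf e_i$; (iii) $\deg\mathbf X\ge\deg\mathbf Y\Rightarrow\mathbf X\succeq\mathbf Y$. For nonzero $\mathbf f$, $lm(\mathbf f)$ and $lc(\mathbf f)$ denote its leading monomial and leading coefficient. Reduction. Let $F$ be a finite set of nonzero vectors and $\mathbf f\in A^m$. A one-step reduction of $\mathbf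 f$ by $F$ exists if there are $\mathbf f_1,\dots,\mathbf f_t\in F$ and $r_1,\dots,r_t\in R$ with: (1) $lm(\mathbf f_i)\mid lm(\mathbf f)$, with $\alpha_i+\exp(lm\,\mathbf f_i)=\exp(lm\,\mathbf f)$; (2) $lc(\mathbf f)=\sum r_i\sigma^{\alpha_i}(lc\,\mathbf f_i)c_{\alpha_i,\exp(lm\,\mathbf f_i)}$. $\mathbf f$ is reducible w.r.t. $F$ if such a reduction exists. Gröbner basis. For a submodule $M\neq0$ of $A^m$, a nonempty finite set $G$ of nonzero vectors of $M$ is a Gröbner basis for $M$ if every nonzero $\mathbf f\in M$ is reducible w.r.t. $G$; $\{0\}$ is a Gröbner basis of $M=0$. *)

theory Defs
  imports Main
begin

text \<open>
  The ring A is the whole type 'a (of class ring_1); R is a subset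
  of it which is a subring. The variables x_1,...,x_n are x 0, ..., x (n-1).
  Exponent vectors are functions nat => nat vanishing from n on. Vectors of A^m
  are functions nat => 'a vanishing from m on; e_i for i < m.
\<close>

type_synonym expo = "nat \<Rightarrow> nat"

definition subring :: "'a::ring_1 set \<Rightarrow> bool" where
  "subring R \<longleftrightarrow> 0 \<in> R \<and> 1 \<in> R \<and> (\<forall>a\<in>R. \<forall>b\<in>R. a + b \<in> R \<and> a - b \<in> R \<and> a * b \<in> R)"

definition exps :: "nat \<Rightarrow> expo set" where
  "exps n = {\<alpha>. \<forall>i\<ge>n. \<alpha> i = 0}"

definition tdeg :: "nat \<Rightarrow> expo \<Rightarrow> nat" where
  "tdeg n \<alpha> = (\<Sum>i<n. \<alpha> i)"

definition mono :: "(nat \<Rightarrow> 'a::ring_1) \<Rightarrow> nat \<Rightarrow> expo \<Rightarrow> 'a" where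
  "mono x n \<alpha> = foldr (\<lambda>i p. x i ^ \<alpha> i * p) [0..<n] 1"

text \<open>c represents a in the left R-basis Mon(A).\<close>
definition repr :: "'a::ring_1 set \<Rightarrow> (nat \<Rightarrow> 'a) \<Rightarrow> nat \<Rightarrow> 'a \<Rightarrow> (expo \<Rightarrow> 'a) \<Rightarrow> bool" where
  "repr R x n a c \<longleftrightarrow> finite {\<alpha>. c \<alpha> \<noteq> 0} \<and> (\<forall>\<alpha>. c \<alpha> \<in> R) \<and>
      (\<forall>\<alpha>. c \<alpha> \<noteq> 0 \<longrightarrow> \<alpha> \<in> exps n) \<and>
      a = (\<Sum>\<alpha>\<in>{\<alpha>. c \<alpha> \<noteq> 0}. c \<alpha> * mono x n \<alpha>)"

definition coeffA :: "'a::ring_1 set \<Rightarrow> (nat \<Rightarrow> 'a) \<Rightarrow> nat \<Rightarrow> 'a \<Rightarrow> expo \<Rightarrow> 'a" where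
  "coeffA R x n a = (THE c. repr R x n a c)"

definition suppA :: "'a::ring_1 set \<Rightarrow> (nat \<Rightarrow> 'a) \<Rightarrow> nat \<Rightarrow> 'a \<Rightarrow> expo set" where
  "suppA R x n a = {\<alpha>. coeffA R x n a \<alpha> \<noteq> 0}"

definition degA :: "'a::ring_1 set \<Rightarrow> (nat \<Rightarrow> 'a) \<Rightarrow> nat \<Rightarrow> 'a \<Rightarrow> nat" where
  "degA R x n a = Max (tdeg n ` suppA R x n a)"

definition lin1 :: "'a::ring_1 set \<Rightarrow> (nat \<Rightarrow> 'a) \<Rightarrow> nat \<Rightarrow> 'a set" where
  "lin1 R x n = {r0 + (\<Sum>k<n. r k * x k) | r0 r. r0 \<in> R \<and> (\<forall>k. r k \<in> R)}"

definition sigma_PBW :: "'a::ring_1 set \<Rightarrow> (nat \<Rightarrow> 'a) \<Rightarrow> nat \<Rightarrow> bool" where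
  "sigma_PBW R x n \<longleftrightarrow> subring R \<and> (\<forall>i<n. x i \<notin> R) \<and>
     (\<forall>a. \<exists>!c. repr R x n a c) \<and>
     (\<forall>i<n. \<forall>r\<in>R - {0}. \<exists>c\<in>R - {0}. x i * r - c * x i \<in> R) \<and>
     (\<forall>i<n. \<forall>j<n. \<exists>c\<in>R - {0}. x j * x i - c * x i * x j \<in> lin1 R x n)"

definition quasi_commutative :: "'a::ring_1 set \<Rightarrow> (nat \<Rightarrow> 'a) \<Rightarrow> nat \<Rightarrow> bool" where
  "quasi_commutative R x n \<longleftrightarrow>
     (\<forall>i<n. \<forall>r\<in>R - {0}. \<exists>c\<in>R - {0}. x i * r = c * x i) \<and>
     (\<forall>i<n. \<forall>j<n. \<exists>c\<in>R - {0}. x j * x i = c * x i * x j)"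

definition sigmaA :: "'a::ring_1 set \<Rightarrow> (nat \<Rightarrow> 'a) \<Rightarrow> nat \<Rightarrow> 'a \<Rightarrow> 'a" where
  "sigmaA R x i r = (THE c. c \<in> R \<and> x i * r - c * x i \<in> R)"

definition cvar :: "'a::ring_1 set \<Rightarrow> (nat \<Rightarrow> 'a) \<Rightarrow> nat \<Rightarrow> nat \<Rightarrow> nat \<Rightarrow> 'a" where
  "cvar R x n i j = (THE c. c \<in> R - {0} \<and> x j * x i - c * x i * x j \<in> lin1 R x n)"

definition invertible_in :: "'a::ring_1 set \<Rightarrow> 'a \<Rightarrow> bool" where
  "invertible_in R c \<longleftrightarrow> (\<exists>u\<in>R. u * c = 1 \<and> c * u = 1)"

definition bijective_ext :: "'a::ring_1 set \<Rightarrow> (nat \<Rightarrow> 'a) \<Rightarrow> nat \<Rightarrow> bool" where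
  "bijective_ext R x n \<longleftrightarrow> (\<forall>i<n. bij_betw (sigmaA R x i) R R) \<and>
     (\<forall>i j. i < j \<and> j < n \<longrightarrow> invertible_in R (cvar R x n i j))"

definition sigma_pow :: "'a::ring_1 set \<Rightarrow> (nat \<Rightarrow> 'a) \<Rightarrow> nat \<Rightarrow> expo \<Rightarrow> 'a \<Rightarrow> 'a" where
  "sigma_pow R x n \<alpha> = foldr (\<lambda>i g. (sigmaA R x i ^^ \<alpha> i) \<circ> g) [0..<n] id"

definition cab :: "'a::ring_1 set \<Rightarrow> (nat \<Rightarrow> 'a) \<Rightarrow> nat \<Rightarrow> expo \<Rightarrow> expo \<Rightarrow> 'a" where
  "cab R x n \<alpha> \<beta> = (THE c. c \<in> R \<and>
     (let p = mono x n \<alpha> * mono x n \<beta> - c * mono x n (\<lambda>k. \<alpha> k + \<beta> k)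
      in p = 0 \<or> degA R x n p < tdeg n (\<lambda>k. \<alpha> k + \<beta> k)))"

definition left_ideal :: "'a::ring_1 set \<Rightarrow> 'a set \<Rightarrow> bool" where
  "left_ideal R I \<longleftrightarrow> I \<subseteq> R \<and> 0 \<in> I \<and> (\<forall>a\<in>I. \<forall>b\<in>I. a + b \<in> I) \<and>
     (\<forall>r\<in>R. \<forall>a\<in>I. r * a \<in> I)"

definition left_noetherian :: "'a::ring_1 set \<Rightarrow> bool" where
  "left_noetherian R \<longleftrightarrow> (\<forall>I. left_ideal R I \<longrightarrow>
     (\<exists>S. finite S \<and> S \<subseteq> I \<and> I = {\<Sum>s\<in>S. r s * s | r. \<forall>s. r s \<in> R}))"

text \<open>Leading monomial of a nonzero element of A w.r.t. an order le on exponents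
  (le a b means x^b is above-or-equal x^a).\<close>
definition lmA :: "'a::ring_1 set \<Rightarrow> (nat \<Rightarrow> 'a) \<Rightarrow> nat \<Rightarrow> (expo \<Rightarrow> expo \<Rightarrow> bool) \<Rightarrow> 'a \<Rightarrow> expo" where
  "lmA R x n le a = (THE \<alpha>. \<alpha> \<in> suppA R x n a \<and> (\<forall>\<beta>\<in>suppA R x n a. le \<beta> \<alpha>))"

definition total_order_on :: "'b set \<Rightarrow> ('b \<Rightarrow> 'b \<Rightarrow> bool) \<Rightarrow> bool" where
  "total_order_on S le \<longleftrightarrow> (\<forall>a\<in>S. le a a) \<and>
     (\<forall>a\<in>S. \<forall>b\<in>S. le a b \<and> le b a \<longrightarrow> a = b) \<and>
     (\<forall>a\<in>S. \<forall>b\<in>S. \<forall>c\<in>S. le a b \<and> le b c \<longrightarrow> le a c) \<and>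
     (\<forall>a\<in>S. \<forall>b\<in>S. le a b \<or> le b a)"

definition monomial_order_A ::
  "'a::ring_1 set \<Rightarrow> (nat \<Rightarrow> 'a) \<Rightarrow> nat \<Rightarrow> (expo \<Rightarrow> expo \<Rightarrow> bool) \<Rightarrow> bool" where
  "monomial_order_A R x n le \<longleftrightarrow> total_order_on (exps n) le \<and>
     (\<forall>\<alpha>\<in>exps n. \<forall>\<beta>\<in>exps n. \<forall>\<gamma>\<in>exps n. \<forall>\<mu>\<in>exps n. le \<alpha> \<beta> \<longrightarrow>
        le (lmA R x n le (mono x n \<gamma> * mono x n \<alpha> * mono x n \<mu>))
           (lmA R x n le (mono x n \<gamma> * mono x n \<beta> * mono x n \<mu>))) \<and>
     (\<forall>\<alpha>\<in>exps n. le (\<lambda>_. 0) \<alpha>) \<and>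
     (\<forall>\<alpha>\<in>exps n. \<forall>\<beta>\<in>exps n. tdeg n \<beta> > tdeg n \<alpha> \<longrightarrow> le \<alpha> \<beta> \<and> \<alpha> \<noteq> \<beta>)"

definition vecs :: "nat \<Rightarrow> (nat \<Rightarrow> 'a::ring_1) set" where
  "vecs m = {v. \<forall>i\<ge>m. v i = 0}"

definition submodule :: "nat \<Rightarrow> (nat \<Rightarrow> 'a::ring_1) set \<Rightarrow> bool" where
  "submodule m M \<longleftrightarrow> M \<subseteq> vecs m \<and> (\<lambda>_. 0) \<in> M \<and>
     (\<forall>u\<in>M. \<forall>v\<in>M. (\<lambda>i. u i + v i) \<in> M) \<and>
     (\<forall>a. \<forall>v\<in>M. (\<lambda>i. a * v i) \<in> M)"

text \<open>Monomials of A^m: pairs (alpha, i) standing for x^alpha e_i, i < m.\<close>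
definition mons :: "nat \<Rightarrow> nat \<Rightarrow> (expo \<times> nat) set" where
  "mons n m = exps n \<times> {..<m}"

definition monomial_order_Am ::
  "'a::ring_1 set \<Rightarrow> (nat \<Rightarrow> 'a) \<Rightarrow> nat \<Rightarrow> (expo \<Rightarrow> expo \<Rightarrow> bool) \<Rightarrow> nat
    \<Rightarrow> (expo \<times> nat \<Rightarrow> expo \<times> nat \<Rightarrow> bool) \<Rightarrow> bool" where
  "monomial_order_Am R x n le m lem \<longleftrightarrow> total_order_on (mons n m) lem \<and>
     (\<forall>\<alpha>\<in>exps n. \<forall>\<beta>\<in>exps n. \<forall>i<m.
        lem (\<alpha>, i) (lmA R x n le (mono x n \<beta> * mono x n \<alpha>), i)) \<and>
     (\<forall>\<alpha>\<in>exps n. \<forall>\<beta>\<in>exps n. \<forall>\<gamma>\<in>exps n. \<forall>i<m. \<forall>j<m. lem (\<alpha>, i) (\<beta>, j) \<longrightarrow>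
        lem (lmA R x n le (mono x n \<gamma> * mono x n \<alpha>), i)
            (lmA R x n le (mono x n \<gamma> * mono x n \<beta>), j)) \<and>
     (\<forall>X\<in>mons n m. \<forall>Y\<in>mons n m. tdeg n (fst X) > tdeg n (fst Y) \<longrightarrow> lem Y X \<and> X \<noteq> Y)"

definition suppV :: "'a::ring_1 set \<Rightarrow> (nat \<Rightarrow> 'a) \<Rightarrow> nat \<Rightarrow> nat \<Rightarrow> (nat \<Rightarrow> 'a) \<Rightarrow> (expo \<times> nat) set" where
  "suppV R x n m f = {(\<alpha>, i). i < m \<and> coeffA R x n (f i) \<alpha> \<noteq> 0}"

definition lmV :: "'a::ring_1 set \<Rightarrow> (nat \<Rightarrow> 'a) \<Rightarrow> nat \<Rightarrow> nat
    \<Rightarrow> (expo \<times> nat \<Rightarrow> expo \<times> nat \<Rightarrow> bool) \<Rightarrow> (nat \<Rightarrow> 'a) \<Rightarrow> expo \<times> nat" where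
  "lmV R x n m lem f = (THE X. X \<in> suppV R x n m f \<and> (\<forall>Y\<in>suppV R x n m f. lem Y X))"

definition lcV :: "'a::ring_1 set \<Rightarrow> (nat \<Rightarrow> 'a) \<Rightarrow> nat \<Rightarrow> nat
    \<Rightarrow> (expo \<times> nat \<Rightarrow> expo \<times> nat \<Rightarrow> bool) \<Rightarrow> (nat \<Rightarrow> 'a) \<Rightarrow> 'a" where
  "lcV R x n m lem f = (let X = lmV R x n m lem f in coeffA R x n (f (snd X)) (fst X))"

definition mdivides :: "expo \<times> nat \<Rightarrow> expo \<times> nat \<Rightarrow> bool" where
  "mdivides X Y \<longleftrightarrow> snd X = snd Y \<and> (\<forall>k. fst X k \<le> fst Y k)"

text \<open>One-step reducibility of f w.r.t. the finite set F.  Repetitions among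
  f_1..f_t are absorbed by summing their coefficients (same alpha_i).\<close>
definition reducible :: "'a::ring_1 set \<Rightarrow> (nat \<Rightarrow> 'a) \<Rightarrow> nat \<Rightarrow> nat
    \<Rightarrow> (expo \<times> nat \<Rightarrow> expo \<times> nat \<Rightarrow> bool) \<Rightarrow> (nat \<Rightarrow> 'a) set \<Rightarrow> (nat \<Rightarrow> 'a) \<Rightarrow> bool" where
  "reducible R x n m lem F f \<longleftrightarrow>
    (\<exists>F' r. F' \<subseteq> F \<and> finite F' \<and>
       (\<forall>g\<in>F'. r g \<in> R \<and> mdivides (lmV R x n m lem g) (lmV R x n m lem f)) \<and>
       lcV R x n m lem f =
         (\<Sum>g\<in>F'. (let \<beta> = fst (lmV R x n m lem g);
                       \<alpha> = (\<lambda>k. fst (lmV R x n m lem f) k - \<beta> k)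
                   in r g * sigma_pow R x n \<alpha> (lcV R x n m lem g) * cab R x n \<alpha> \<beta>)))"

definition groebner_basis :: "'a::ring_1 set \<Rightarrow> (nat \<Rightarrow> 'a) \<Rightarrow> nat \<Rightarrow> nat
    \<Rightarrow> (expo \<times> nat \<Rightarrow> expo \<times> nat \<Rightarrow> bool) \<Rightarrow> (nat \<Rightarrow> 'a) set \<Rightarrow> (nat \<Rightarrow> 'a) set \<Rightarrow> bool" where
  "groebner_basis R x n m lem M G \<longleftrightarrow>
    (if M = {\<lambda>_. 0} then G = {\<lambda>_. 0}
     else finite G \<and> G \<noteq> {} \<and> G \<subseteq> M - {\<lambda>_. 0} \<and>
          (\<forall>f\<in>M. f \<noteq> (\<lambda>_. 0) \<longrightarrow> reducible R x n m lem G f))"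

end

theory Submission
  imports Defs Complex_Main
begin


lemma nat_seq_nondec_sub:
  fixes s :: "nat \<Rightarrow> nat"
  shows "\<exists>f. strict_mono f \<and> (\<forall>j. s (f j) \<le> s (f (Suc j)))"
proof -
  obtain f where f: "strict_mono f" "monoseq (\<lambda>j. s (f j))" using seq_monosub by blast
  show ?thesis
  proof (cases "\<forall>j. s (f j) \<le> s (f (Suc j))")
    case True then show ?thesis using f by blast
  next
    case False
    then have dec: "\<forall>j. s (f (Suc j)) \<le> s (f j)" using f(2) unfolding monoseq_Suc by blast
    have decs: "s (f j) \<le> s (f i)" if "i \<le> j" for i j
      using that
    proof (induction j)
      case 0 then show ?case by simp
    next
      case (Suc j)
      show ?case
      proof (cases "i = Suc j")
        case False
        then have "s (f j) \<le> s (f i)" using Suc by simp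
        moreover have "s (f (Suc j)) \<le> s (f j)" using dec by blast
        ultimately show ?thesis by simp
      qed simp
    qed
    define v where "v = (LEAST v. \<exists>j. s (f j) = v)"
    have "\<exists>j. s (f j) = v" unfolding v_def by (rule LeastI[of _ "s (f 0)"]) blast
    then obtain j0 where j0: "s (f j0) = v" by blast
    have minv: "v \<le> s (f j)" for j unfolding v_def by (rule Least_le) blast
    have const: "s (f (j + j0)) = v" for j
      using decs[of j0 "j + j0"] minv[of "j + j0"] j0 by simp
    have "strict_mono (\<lambda>j. f (j + j0))" using f(1) unfolding strict_mono_def by simp
    moreover have "\<forall>j. s (f (j + j0)) \<le> s (f (Suc j + j0))" using const by presburger
    ultimately show ?thesis by (intro exI[of _ "\<lambda>j. f (j + j0)"]) simp
  qed
qed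

lemma dickson_sub:
  fixes s :: "nat \<Rightarrow> expo"
  assumes "\<And>k. s k \<in> exps n"
  shows "\<exists>f. strict_mono f \<and> (\<forall>j i. s (f j) i \<le> s (f (Suc j)) i)"
  using assms
proof (induction n arbitrary: s)
  case 0
  then have "\<And>k. s k = (\<lambda>_. 0)" by (auto simp: exps_def)
  then show ?case by (intro exI[of _ id]) (simp add: strict_mono_def)
next
  case (Suc n)
  define t where "t k = (\<lambda>i. if i < n then s k i else 0)" for k
  have "\<And>k. t k \<in> exps n" by (simp add: t_def exps_def)
  then obtain f where f: "strict_mono f" "\<forall>j i. t (f j) i \<le> t (f (Suc j)) i"
    using Suc.IH[of t] by blast
  obtain g where g: "strict_mono g" "\<forall>j. s (f (g j)) n \<le> s (f (g (Suc j))) n"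
    using nat_seq_nondec_sub[of "\<lambda>j. s (f j) n"] by blast
  have fmono: "\<And>a b. a \<le> b \<Longrightarrow> t (f a) i \<le> t (f b) i" for i
  proof -
    fix a b :: nat assume "a \<le> b"
    then show "t (f a) i \<le> t (f b) i"
    proof (induction b)
      case 0 then show ?case by simp
    next
      case (Suc b)
      show ?case
      proof (cases "a = Suc b")
        case False
        then have "t (f a) i \<le> t (f b) i" using Suc by simp
        also have "\<dots> \<le> t (f (Suc b)) i" using f(2) by blast
        finally show ?thesis .
      qed simp
    qed
  qed
  have "strict_mono (\<lambda>j. f (g j))" using f(1) g(1) by (simp add: strict_mono_def)
  moreover have "s (f (g j)) i \<le> s (f (g (Suc j))) i" for j i
  proof -
    have gle: "g j \<le> g (Suc j)" using g(1) by (simp add: strict_mono_less_eq)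
    consider "i < n" | "i = n" | "i > n" by linarith
    then show ?thesis
    proof cases
      case 1 then show ?thesis using fmono[OF gle, of i] by (simp add: t_def)
    next
      case 2 then show ?thesis using g(2) by simp
    next
      case 3 then have "s (f (g j)) i = 0" using Suc.prems by (simp add: exps_def)
      then show ?thesis by simp
    qed
  qed
  ultimately show ?case by blast
qed



lemma left_ideal_sum:
  assumes "left_ideal R I" "finite S" "S \<subseteq> I" "\<forall>s\<in>S. r s \<in> R"
  shows "(\<Sum>s\<in>S. r s * s) \<in> I"
  using assms(2,3,4)
proof (induction S rule: finite_induct)
  case empty then show ?case using assms(1) by (simp add: left_ideal_def)
next
  case (insert s S)
  then have "r s * s \<in> I" using assms(1) by (simp add: left_ideal_def)
  moreover have "(\<Sum>s\<in>S. r s * s) \<in> I" using insert by simp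
  ultimately show ?case using insert assms(1) by (simp add: left_ideal_def)
qed

lemma no_strict_chain:
  assumes noeth: "left_noetherian R" and id: "\<And>j. left_ideal R (I j)"
    and ch: "\<And>j. I j \<subseteq> I (Suc j)"
  shows "\<exists>j. I (Suc j) \<subseteq> I j"
proof -
  have chle: "I i \<subseteq> I j" if "i \<le> j" for i j
    using lift_Suc_mono_le[of I i j] ch that by blast
  define U where "U = (\<Union>j. I j)"
  have "left_ideal R U" unfolding left_ideal_def
  proof (intro conjI ballI)
    show "U \<subseteq> R"
    proof
      fix u assume "u \<in> U"
      then obtain j where "u \<in> I j" by (auto simp: U_def)
      then show "u \<in> R" using id[of j] unfolding left_ideal_def by blast
    qed
    show "0 \<in> U" using id[of 0] by (auto simp: U_def left_ideal_def)
  next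
    fix a b assume "a \<in> U" "b \<in> U"
    then obtain i j where ij: "a \<in> I i" "b \<in> I j" by (auto simp: U_def)
    then have "a \<in> I (max i j)" "b \<in> I (max i j)" using chle by (auto intro: max.cobounded1 max.cobounded2)
    then have "a + b \<in> I (max i j)" using id by (simp add: left_ideal_def)
    then show "a + b \<in> U" by (auto simp: U_def)
  next
    fix r a assume "r \<in> R" "a \<in> U"
    then obtain i where "a \<in> I i" by (auto simp: U_def)
    then have "r * a \<in> I i" using id \<open>r \<in> R\<close> by (simp add: left_ideal_def)
    then show "r * a \<in> U" by (auto simp: U_def)
  qed
  with noeth have "\<exists>S. finite S \<and> S \<subseteq> U \<and> U = {\<Sum>s\<in>S. r s * s | r. \<forall>s. r s \<in> R}"
    unfolding left_noetherian_def by (elim allE impE)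
  then obtain S where S: "finite S" "S \<subseteq> U" "U = {\<Sum>s\<in>S. r s * s | r. \<forall>s. r s \<in> R}"
    by (elim exE conjE)
  have "\<exists>N. S \<subseteq> I N" using S(1,2)
  proof (induction S rule: finite_induct)
    case empty then show ?case by simp
  next
    case (insert s S)
    then obtain N where N: "S \<subseteq> I N" by blast
    from insert obtain j where j: "s \<in> I j" by (auto simp: U_def)
    have "S \<subseteq> I (max N j)" using N chle[of N "max N j"] by auto
    moreover have "s \<in> I (max N j)" using j chle[of j "max N j"] by auto
    ultimately show ?case by blast
  qed
  then obtain N where N: "S \<subseteq> I N" by blast
  have "U \<subseteq> I N"
  proof
    fix u assume "u \<in> U"
    then obtain r where r: "u = (\<Sum>s\<in>S. r s * s)" "\<forall>s. r s \<in> R" using S(3) by blast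
    show "u \<in> I N" unfolding r(1) using left_ideal_sum[OF id S(1) N] r(2) by blast
  qed
  then have "I (Suc N) \<subseteq> I N" by (auto simp: U_def)
  then show ?thesis by blast
qed

definition Sp :: "(expo \<Rightarrow> 'a::ring_1 set) \<Rightarrow> expo set \<Rightarrow> expo \<Rightarrow> 'a set" where
  "Sp K F Y = {\<Sum>X\<in>{X\<in>F. \<forall>k. X k \<le> Y k}. kk X | kk. \<forall>X\<in>F. kk X \<in> K X}"

lemma Sp_contains:
  assumes "finite F" "X \<in> F" "\<forall>k. X k \<le> Y k" "a \<in> K X" "\<forall>Z\<in>F. 0 \<in> K Z"
  shows "a \<in> Sp K F Y"
proof -
  define kk where "kk = (\<lambda>Z. if Z = X then a else 0)"
  have "(\<Sum>Z\<in>{Z\<in>F. \<forall>k. Z k \<le> Y k}. kk Z) = a"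
    using assms(1,2,3) by (simp add: kk_def)
  moreover have "\<forall>Z\<in>F. kk Z \<in> K Z" using assms(4,5) by (simp add: kk_def)
  ultimately show ?thesis unfolding Sp_def by blast
qed

lemma hilbert_family:
  assumes noeth: "left_noetherian R"
    and idl: "\<forall>Y\<in>exps n. left_ideal R (K Y)"
    and mon: "\<forall>X\<in>exps n. \<forall>Y\<in>exps n. (\<forall>k. X k \<le> Y k) \<longrightarrow> K X \<subseteq> K Y"
  shows "\<exists>F. finite F \<and> F \<subseteq> exps n \<and> (\<forall>Y\<in>exps n. K Y \<subseteq> Sp K F Y)"
proof (rule ccontr)
  assume "\<not> ?thesis"
  then have bad: "\<And>F. finite F \<Longrightarrow> F \<subseteq> exps n \<Longrightarrow> \<exists>Y. Y \<in> exps n \<and> \<not> K Y \<subseteq> Sp K F Y"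
    by blast
  define ch where "ch F = (SOME Y. Y \<in> exps n \<and> \<not> K Y \<subseteq> Sp K F Y)" for F
  define L where "L = rec_nat [] (\<lambda>k l. ch (set l) # l)"
  have L0: "L 0 = []" and LS: "L (Suc k) = ch (set (L k)) # L k" for k by (simp_all add: L_def)
  define Y where "Y k = ch (set (L k))" for k
  have props: "set (L k) \<subseteq> exps n \<and> Y k \<in> exps n \<and> \<not> K (Y k) \<subseteq> Sp K (set (L k)) (Y k)" for k
  proof (induction k)
    case 0
    have "\<exists>Y. Y \<in> exps n \<and> \<not> K Y \<subseteq> Sp K (set (L 0)) Y" using bad[of "set (L 0)"] by (simp add: L0)
    then have "Y 0 \<in> exps n \<and> \<not> K (Y 0) \<subseteq> Sp K (set (L 0)) (Y 0)"
      unfolding Y_def ch_def by (rule someI_ex)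
    then show ?case by (simp add: L0)
  next
    case (Suc k)
    then have s: "set (L (Suc k)) \<subseteq> exps n" by (simp add: LS Y_def)
    have "\<exists>Y. Y \<in> exps n \<and> \<not> K Y \<subseteq> Sp K (set (L (Suc k))) Y" using bad[OF _ s] by simp
    then have "Y (Suc k) \<in> exps n \<and> \<not> K (Y (Suc k)) \<subseteq> Sp K (set (L (Suc k))) (Y (Suc k))"
      unfolding Y_def ch_def by (rule someI_ex)
    then show ?case using s by simp
  qed
  have inL: "i < k \<Longrightarrow> Y i \<in> set (L k)" for i k
  proof (induction k)
    case 0 then show ?case by simp
  next
    case (Suc k) then show ?case by (auto simp: LS Y_def less_Suc_eq)
  qed
  obtain f where f: "strict_mono f" "\<forall>j i. Y (f j) i \<le> Y (f (Suc j)) i"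
    using dickson_sub[of Y n] props by blast
  define I where "I j = K (Y (f j))" for j
  have "\<exists>j. I (Suc j) \<subseteq> I j"
  proof (rule no_strict_chain[OF noeth])
    show "left_ideal R (I j)" for j using idl props by (simp add: I_def)
    show "I j \<subseteq> I (Suc j)" for j unfolding I_def
      by (rule mon[rule_format]) (use props f(2) in auto)
  qed
  then obtain j where j: "I (Suc j) \<subseteq> I j" by blast
  have "I j \<subseteq> Sp K (set (L (f (Suc j)))) (Y (f (Suc j)))"
  proof
    fix a assume "a \<in> I j"
    show "a \<in> Sp K (set (L (f (Suc j)))) (Y (f (Suc j)))"
    proof (rule Sp_contains)
      show "Y (f j) \<in> set (L (f (Suc j)))" using inL f(1) by (simp add: strict_mono_def)
      show "\<forall>k. Y (f j) k \<le> Y (f (Suc j)) k" using f(2) by blast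
      show "a \<in> K (Y (f j))" using \<open>a \<in> I j\<close> by (simp add: I_def)
      show "\<forall>Z\<in>set (L (f (Suc j))). 0 \<in> K Z" using props idl by (auto simp: left_ideal_def)
    qed simp
  qed
  with j have "K (Y (f (Suc j))) \<subseteq> Sp K (set (L (f (Suc j)))) (Y (f (Suc j)))"
    unfolding I_def by (rule subset_trans)
  then show False using props[of "f (Suc j)"] by simp
qed



locale qc =
  fixes R :: "'a::ring_1 set" and x :: "nat \<Rightarrow> 'a" and n :: nat
  assumes pbw: "sigma_PBW R x n" and qcom: "quasi_commutative R x n" and bij: "bijective_ext R x n"
begin

abbreviation C where "C \<equiv> coeffA R x n"
abbreviation X where "X \<equiv> mono x n"

lemma sub: "subring R" using pbw by (simp add: sigma_PBW_def)
lemma R0: "0 \<in> R" and R1: "1 \<in> R" using sub by (auto simp: subring_def)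
lemma Radd: "a \<in> R \<Longrightarrow> b \<in> R \<Longrightarrow> a + b \<in> R"
  and Rdiff: "a \<in> R \<Longrightarrow> b \<in> R \<Longrightarrow> a - b \<in> R"
  and Rmult: "a \<in> R \<Longrightarrow> b \<in> R \<Longrightarrow> a * b \<in> R" using sub by (auto simp: subring_def)
lemma Rneg: "a \<in> R \<Longrightarrow> - a \<in> R" using Rdiff[OF R0] by simp

lemma Rsum: "finite S \<Longrightarrow> (\<And>s. s \<in> S \<Longrightarrow> f s \<in> R) \<Longrightarrow> sum f S \<in> R"
  by (induction S rule: finite_induct) (auto intro: Radd R0)

lemma ex1_repr: "\<exists>!c. repr R x n a c" using pbw by (simp add: sigma_PBW_def)

lemma repr_C: "repr R x n a (C a)"
  unfolding coeffA_def using ex1_repr by (rule theI')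

lemma C_eq: "repr R x n a c \<Longrightarrow> C a = c"
  unfolding coeffA_def using ex1_repr by (rule the1_equality)

lemma C_R: "C a \<alpha> \<in> R" using repr_C by (simp add: repr_def)
lemma C_exps: "C a \<alpha> \<noteq> 0 \<Longrightarrow> \<alpha> \<in> exps n" using repr_C by (simp add: repr_def)
lemma C_fin: "finite {\<alpha>. C a \<alpha> \<noteq> 0}" using repr_C by (simp add: repr_def)
lemma C_sum: "a = (\<Sum>\<alpha>\<in>{\<alpha>. C a \<alpha> \<noteq> 0}. C a \<alpha> * X \<alpha>)" using repr_C by (simp add: repr_def)

lemma C_sum_super:
  assumes "finite S" "{\<alpha>. C a \<alpha> \<noteq> 0} \<subseteq> S"
  shows "a = (\<Sum>\<alpha>\<in>S. C a \<alpha> * X \<alpha>)"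
proof -
  have "(\<Sum>\<alpha>\<in>S. C a \<alpha> * X \<alpha>) = (\<Sum>\<alpha>\<in>{\<alpha>. C a \<alpha> \<noteq> 0}. C a \<alpha> * X \<alpha>)"
    using assms by (intro sum.mono_neutral_right) auto
  then show ?thesis using C_sum by simp
qed

lemma C_intro:
  assumes "finite S" "S \<subseteq> exps n" "\<And>\<alpha>. c \<alpha> \<in> R" "\<And>\<alpha>. \<alpha> \<notin> S \<Longrightarrow> c \<alpha> = 0"
    and "a = (\<Sum>\<alpha>\<in>S. c \<alpha> * X \<alpha>)"
  shows "C a = c"
proof (rule C_eq)
  have sub: "{\<alpha>. c \<alpha> \<noteq> 0} \<subseteq> S" using assms(4) by blast
  have "(\<Sum>\<alpha>\<in>S. c \<alpha> * X \<alpha>) = (\<Sum>\<alpha>\<in>{\<alpha>. c \<alpha> \<noteq> 0}. c \<alpha> * X \<alpha>)"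
    using assms(1) sub by (intro sum.mono_neutral_right) auto
  then show "repr R x n a c" unfolding repr_def
    using assms sub finite_subset by auto
qed

lemma C_add: "C (a + b) = (\<lambda>\<alpha>. C a \<alpha> + C b \<alpha>)"
proof (rule C_intro)
  let ?S = "{\<alpha>. C a \<alpha> \<noteq> 0} \<union> {\<alpha>. C b \<alpha> \<noteq> 0}"
  show "finite ?S" using C_fin by simp
  show "?S \<subseteq> exps n" using C_exps by blast
  show "C a \<alpha> + C b \<alpha> \<in> R" for \<alpha> using C_R by (simp add: Radd)
  show "\<alpha> \<notin> ?S \<Longrightarrow> C a \<alpha> + C b \<alpha> = 0" for \<alpha> by simp
  have "a = (\<Sum>\<alpha>\<in>?S. C a \<alpha> * X \<alpha>)" "b = (\<Sum>\<alpha>\<in>?S. C b \<alpha> * X \<alpha>)"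
    using C_fin by (intro C_sum_super; auto)+
  then show "a + b = (\<Sum>\<alpha>\<in>?S. (C a \<alpha> + C b \<alpha>) * X \<alpha>)"
    by (simp add: distrib_right sum.distrib)
qed

lemma C_lmult: "r \<in> R \<Longrightarrow> C (r * a) = (\<lambda>\<alpha>. r * C a \<alpha>)"
proof (rule C_intro)
  let ?S = "{\<alpha>. C a \<alpha> \<noteq> 0}"
  show "finite ?S" using C_fin by simp
  show "?S \<subseteq> exps n" using C_exps by blast
  show "r \<in> R \<Longrightarrow> r * C a \<alpha> \<in> R" for \<alpha> using C_R by (simp add: Rmult)
  show "\<alpha> \<notin> ?S \<Longrightarrow> r * C a \<alpha> = 0" for \<alpha> by simp
  show "r * a = (\<Sum>\<alpha>\<in>?S. r * C a \<alpha> * X \<alpha>)"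
    by (subst C_sum) (simp add: sum_distrib_left mult.assoc)
qed

lemma C_zero: "C 0 = (\<lambda>_. 0)"
  by (rule C_intro[where S="{}"]) (auto simp: R0)

lemma C_zero_iff: "C a = (\<lambda>_. 0) \<longleftrightarrow> a = 0"
proof
  assume "C a = (\<lambda>_. 0)"
  then show "a = 0" using C_sum[of a] by simp
qed (simp add: C_zero)

lemma C_single:
  assumes "c \<in> R" "\<alpha> \<in> exps n"
  shows "C (c * X \<alpha>) = (\<lambda>\<beta>. if \<beta> = \<alpha> then c else 0)"
  by (rule C_intro[where S="{\<alpha>}"]) (use assms in \<open>auto simp: R0\<close>)

lemma single_inj:
  assumes "c \<in> R" "d \<in> R" "\<alpha> \<in> exps n" "c * X \<alpha> = d * X \<alpha>"
  shows "c = d"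
  using C_single[OF assms(1,3)] C_single[OF assms(2,3)] assms(4) by metis

end


lemma foldr_mono_z: fixes x :: "nat \<Rightarrow> 'a::ring_1" shows "foldr (\<lambda>i p. x i ^ \<alpha> i * p) xs z = foldr (\<lambda>i p. x i ^ \<alpha> i * p) xs 1 * z"
  by (induction xs) (simp_all add: mult.assoc)

lemma mono_Suc: "mono x (Suc k) \<alpha> = mono x k \<alpha> * x k ^ \<alpha> k"
proof -
  have "mono x (Suc k) \<alpha> = foldr (\<lambda>i p. x i ^ \<alpha> i * p) [0..<k] (x k ^ \<alpha> k * 1)"
    unfolding mono_def by simp
  also have "\<dots> = mono x k \<alpha> * x k ^ \<alpha> k"
    unfolding mono_def by (subst foldr_mono_z) simp
  finally show ?thesis .
qed

lemma mono_0[simp]: "mono x 0 \<alpha> = 1" by (simp add: mono_def)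

lemma mono_zero: "mono x k (\<lambda>_. 0) = 1"
  by (induction k) (simp_all add: mono_Suc)

lemma foldr_comp_z: "foldr (\<lambda>i g. h i \<circ> g) xs z = foldr (\<lambda>i g. h i \<circ> g) xs id \<circ> z"
  by (induction xs) auto

lemma sigma_pow_Suc: "sigma_pow R x (Suc k) \<alpha> = sigma_pow R x k \<alpha> \<circ> (sigmaA R x k ^^ \<alpha> k)"
proof -
  have "sigma_pow R x (Suc k) \<alpha> = foldr (\<lambda>i g. (sigmaA R x i ^^ \<alpha> i) \<circ> g) [0..<k] ((sigmaA R x k ^^ \<alpha> k) \<circ> id)"
    unfolding sigma_pow_def by simp
  also have "\<dots> = sigma_pow R x k \<alpha> \<circ> (sigmaA R x k ^^ \<alpha> k)"
    unfolding sigma_pow_def by (subst foldr_comp_z) simp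
  finally show ?thesis .
qed

lemma sigma_pow_0[simp]: "sigma_pow R x 0 \<alpha> = id" by (simp add: sigma_pow_def)

definition ev :: "nat \<Rightarrow> expo" where "ev i = (\<lambda>k. if k = i then 1 else 0)"

lemma mono_ev: "mono x k (ev i) = (if i < k then x i else 1)"
  by (induction k) (auto simp: mono_Suc ev_def less_Suc_eq)

lemma mono_exps_eq: "\<alpha> \<in> exps k \<Longrightarrow> k \<le> n \<Longrightarrow> mono x n \<alpha> = mono x k \<alpha>"
proof (induction n)
  case 0 then show ?case by simp
next
  case (Suc n)
  show ?case
  proof (cases "k = Suc n")
    case False
    then have "mono x n \<alpha> = mono x k \<alpha>" using Suc by simp
    moreover have "\<alpha> n = 0" using Suc.prems False by (simp add: exps_def)
    ultimately show ?thesis by (simp add: mono_Suc)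
  qed simp
qed

context qc begin

definition rhom :: "('a \<Rightarrow> 'a) \<Rightarrow> bool" where
  "rhom h \<longleftrightarrow> (\<forall>r\<in>R. h r \<in> R) \<and> (\<forall>r\<in>R. \<forall>s\<in>R. h (r * s) = h r * h s \<and> h (r + s) = h r + h s) \<and> h 1 = 1"

lemma rhom_id: "rhom id" by (simp add: rhom_def)
lemma rhom_comp: "rhom f \<Longrightarrow> rhom g \<Longrightarrow> rhom (f \<circ> g)" by (simp add: rhom_def)
lemma rhom_pow: "rhom f \<Longrightarrow> rhom (f ^^ k)"
  by (induction k) (simp_all add: rhom_id rhom_comp)
lemma rhom_R: "rhom h \<Longrightarrow> r \<in> R \<Longrightarrow> h r \<in> R" by (simp add: rhom_def)
lemma rhom_mult: "rhom h \<Longrightarrow> r \<in> R \<Longrightarrow> s \<in> R \<Longrightarrow> h (r * s) = h r * h s" by (simp add: rhom_def)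
lemma rhom_add: "rhom h \<Longrightarrow> r \<in> R \<Longrightarrow> s \<in> R \<Longrightarrow> h (r + s) = h r + h s" by (simp add: rhom_def)
lemma rhom_one: "rhom h \<Longrightarrow> h 1 = 1" by (simp add: rhom_def)
lemma rhom_zero: "rhom h \<Longrightarrow> h 0 = 0"
  using rhom_add[of h 0 0] R0 by simp

lemma rhom_inv: "rhom h \<Longrightarrow> u \<in> R \<Longrightarrow> invertible_in R u \<Longrightarrow> invertible_in R (h u)"
  unfolding invertible_in_def
proof -
  assume h: "rhom h" and u: "u \<in> R" and "\<exists>v\<in>R. v * u = 1 \<and> u * v = 1"
  then obtain v where v: "v \<in> R" "v * u = 1" "u * v = 1" by blast
  have "h v * h u = h (v * u)" using rhom_mult[OF h v(1) u] by simp
  then have 1: "h v * h u = 1" using v(2) rhom_one[OF h] by simp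
  have "h u * h v = h (u * v)" using rhom_mult[OF h u v(1)] by simp
  then have 2: "h u * h v = 1" using v(3) rhom_one[OF h] by simp
  note 1 2
  then show "\<exists>w\<in>R. w * h u = 1 \<and> h u * w = 1" using rhom_R[OF h v(1)] by blast
qed

lemma inv_R: "invertible_in R u \<Longrightarrow> \<exists>v\<in>R. v * u = 1 \<and> u * v = 1" by (simp add: invertible_in_def)
lemma inv_mult: "invertible_in R u \<Longrightarrow> invertible_in R v \<Longrightarrow> invertible_in R (u * v)"
  unfolding invertible_in_def
proof -
  assume "\<exists>a\<in>R. a * u = 1 \<and> u * a = 1" "\<exists>b\<in>R. b * v = 1 \<and> v * b = 1"
  then obtain a b where ab: "a \<in> R" "a * u = 1" "u * a = 1" "b \<in> R" "b * v = 1" "v * b = 1" by blast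
  have e1: "a * (u * v) = v" by (simp add: mult.assoc[symmetric] ab(2))
  have "(b * a) * (u * v) = b * (a * (u * v))" by (simp only: mult.assoc)
  then have "(b * a) * (u * v) = 1" using e1 ab(5) by simp
  moreover have e2: "v * (b * a) = a" by (simp add: mult.assoc[symmetric] ab(6))
  have "(u * v) * (b * a) = u * (v * (b * a))" by (simp only: mult.assoc)
  then have "(u * v) * (b * a) = 1" using e2 ab(3) by simp
  ultimately show "\<exists>c\<in>R. c * (u * v) = 1 \<and> u * v * c = 1" using ab Rmult by blast
qed
lemma inv_one: "invertible_in R 1" using R1 by (simp add: invertible_in_def)

lemma ev_exps: "i < n \<Longrightarrow> ev i \<in> exps n" by (simp add: ev_def exps_def)
lemma zero_exps: "(\<lambda>_. 0) \<in> exps n" by (simp add: exps_def)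

lemma X_ev: "i < n \<Longrightarrow> X (ev i) = x i" by (simp add: mono_ev)
lemma X_zero: "X (\<lambda>_. 0) = 1" by (simp add: mono_zero)

lemma noR:
  assumes "i < n" "d \<in> R" "d * x i \<in> R"
  shows "d = 0"
proof -
  let ?s = "d * x i"
  have ne: "ev i \<noteq> (\<lambda>_. 0)"
  proof
    assume "ev i = (\<lambda>_. 0)"
    then have "ev i i = 0" by simp
    then show False by (simp add: ev_def)
  qed
  have e: "d * X (ev i) = ?s * X (\<lambda>_. 0)" by (simp only: X_ev[OF assms(1)] X_zero mult_1_right)
  have 1: "C (d * X (ev i)) (ev i) = d" by (simp add: C_single[OF assms(2) ev_exps[OF assms(1)]])
  have 2: "C (?s * X (\<lambda>_. 0)) (ev i) = 0" using ne by (simp only: C_single[OF assms(3) zero_exps] if_False)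
  show ?thesis using 1 2 e by simp
qed

abbreviation sig where "sig i \<equiv> sigmaA R x i"

lemma sig_unique: "i < n \<Longrightarrow> r \<in> R \<Longrightarrow> c \<in> R \<Longrightarrow> x i * r = c * x i \<Longrightarrow> sig i r = c"
  unfolding sigmaA_def
proof (rule the1_equality)
  assume a: "i < n" "r \<in> R" "c \<in> R" "x i * r = c * x i"
  show "\<exists>!c. c \<in> R \<and> x i * r - c * x i \<in> R"
  proof (rule ex1I[of _ c])
    show "c \<in> R \<and> x i * r - c * x i \<in> R" using a R0 by simp
    fix c' assume "c' \<in> R \<and> x i * r - c' * x i \<in> R"
    then have "(c - c') * x i \<in> R" "c - c' \<in> R" using a by (simp_all add: algebra_simps Rdiff)
    then show "c' = c" using noR a by fastforce
  qed
  show "c \<in> R \<and> x i * r - c * x i \<in> R" using a R0 by simp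
qed

lemma sig_prop:
  assumes "i < n" "r \<in> R"
  shows "sig i r \<in> R \<and> x i * r = sig i r * x i"
proof -
  obtain c where c: "c \<in> R" "x i * r = c * x i"
  proof (cases "r = 0")
    case True then show ?thesis using that R0 by simp
  next
    case False
    have "\<forall>i<n. \<forall>r\<in>R - {0}. \<exists>c\<in>R - {0}. x i * r = c * x i"
      using qcom by (simp add: quasi_commutative_def)
    then obtain c where "c \<in> R - {0}" "x i * r = c * x i" using assms False by blast
    then show ?thesis using that by blast
  qed
  then show ?thesis using sig_unique assms by simp
qed

lemma sig_rhom: "i < n \<Longrightarrow> rhom (sig i)"
  unfolding rhom_def
proof (intro conjI ballI)
  assume i: "i < n"
  show "r \<in> R \<Longrightarrow> sig i r \<in> R" for r using sig_prop i by blast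
  show "sig i 1 = 1" using sig_unique[OF i R1 R1] by simp
  fix r s assume rs: "r \<in> R" "s \<in> R"
  have "x i * (r * s) = (x i * r) * s" by (simp add: mult.assoc)
  also have "\<dots> = sig i r * (x i * s)" using sig_prop[OF i rs(1)] by (simp add: mult.assoc)
  also have "\<dots> = sig i r * sig i s * x i" using sig_prop[OF i rs(2)] by (simp add: mult.assoc)
  finally have "x i * (r * s) = sig i r * sig i s * x i" .
  have sR: "sig i r \<in> R" "sig i s \<in> R" using sig_prop[OF i rs(1)] sig_prop[OF i rs(2)] by blast+
  show "sig i (r * s) = sig i r * sig i s"
    by (rule sig_unique[OF i Rmult[OF rs] Rmult[OF sR] \<open>x i * (r * s) = sig i r * sig i s * x i\<close>])
  have e1: "x i * r = sig i r * x i" "x i * s = sig i s * x i"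
    using sig_prop[OF i rs(1)] sig_prop[OF i rs(2)] by blast+
  have "x i * (r + s) = x i * r + x i * s" by (rule distrib_left)
  also have "\<dots> = sig i r * x i + sig i s * x i" by (simp only: e1)
  also have "\<dots> = (sig i r + sig i s) * x i" by (rule distrib_right[symmetric])
  finally show "sig i (r + s) = sig i r + sig i s"
    by (rule sig_unique[OF i Radd[OF rs] Radd[OF sR]])
qed

lemma sig_bij: "i < n \<Longrightarrow> bij_betw (sig i) R R" using bij by (simp add: bijective_ext_def)

lemma sigma_pow_rhom: "k \<le> n \<Longrightarrow> rhom (sigma_pow R x k \<alpha>)"
  by (induction k) (simp_all add: sigma_pow_Suc rhom_id rhom_comp rhom_pow sig_rhom)

lemma sigma_pow_bij: "k \<le> n \<Longrightarrow> bij_betw (sigma_pow R x k \<alpha>) R R"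
proof (induction k)
  case 0 then show ?case using bij_betw_id[of R] by (simp add: id_def)
next
  case (Suc k)
  then show ?case unfolding sigma_pow_Suc
    by (intro bij_betw_trans[of _ R R] bij_betw_funpow sig_bij) simp_all
qed

lemma xpow_comm: "i < n \<Longrightarrow> r \<in> R \<Longrightarrow> x i ^ a * r = (sig i ^^ a) r * x i ^ a"
proof (induction a)
  case 0 then show ?case by simp
next
  case (Suc a)
  have R': "(sig i ^^ a) r \<in> R" using rhom_R[OF rhom_pow[OF sig_rhom]] Suc by blast
  have "x i ^ Suc a * r = x i * (x i ^ a * r)" by (simp add: mult.assoc)
  also have "\<dots> = x i * (sig i ^^ a) r * x i ^ a" using Suc by (simp add: mult.assoc)
  also have "\<dots> = sig i ((sig i ^^ a) r) * x i * x i ^ a" using sig_prop[OF Suc.prems(1) R'] by simp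
  finally show ?case by (simp add: mult.assoc)
qed

lemma mono_comm: "k \<le> n \<Longrightarrow> r \<in> R \<Longrightarrow> mono x k \<alpha> * r = sigma_pow R x k \<alpha> r * mono x k \<alpha>"
proof (induction k arbitrary: r)
  case 0 then show ?case by simp
next
  case (Suc k)
  have R': "(sig k ^^ \<alpha> k) r \<in> R" using rhom_R[OF rhom_pow[OF sig_rhom]] Suc by simp
  have "mono x (Suc k) \<alpha> * r = mono x k \<alpha> * (x k ^ \<alpha> k * r)" by (simp add: mono_Suc mult.assoc)
  also have "\<dots> = mono x k \<alpha> * (sig k ^^ \<alpha> k) r * x k ^ \<alpha> k"
    using xpow_comm Suc by (simp add: mult.assoc)
  also have "\<dots> = sigma_pow R x (Suc k) \<alpha> r * mono x (Suc k) \<alpha>"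
    using Suc.IH[OF _ R'] Suc.prems by (simp add: sigma_pow_Suc mono_Suc mult.assoc)
  finally show ?case .
qed

end


lemma mono_ev2: "i < j \<Longrightarrow> mono x k (\<lambda>t. ev i t + ev j t) = (if j < k then x i * x j else if i < k then x i else 1)"
  by (induction k) (auto simp: mono_Suc ev_def less_Suc_eq)

context qc begin

lemma C_sumf: "finite S \<Longrightarrow> C (\<Sum>s\<in>S. f s) = (\<lambda>\<alpha>. \<Sum>s\<in>S. C (f s) \<alpha>)"
  by (induction S rule: finite_induct) (simp_all add: C_zero C_add)

lemma C_X: "\<alpha> \<in> exps n \<Longrightarrow> C (r * X \<alpha>) \<beta> = (if \<beta> = \<alpha> then r else 0)" if "r \<in> R"
  using C_single[OF that] by simp

lemma ev_add_exps: "i < n \<Longrightarrow> j < n \<Longrightarrow> (\<lambda>t. ev i t + ev j t) \<in> exps n"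
  by (simp add: ev_def exps_def)

lemma lin1_coeff:
  assumes "i < j" "j < n" "a \<in> lin1 R x n"
  shows "C a (\<lambda>t. ev i t + ev j t) = 0"
proof -
  let ?p = "(\<lambda>t. ev i t + ev j t)"
  have "\<exists>r0 r. a = r0 + (\<Sum>k<n. r k * x k) \<and> r0 \<in> R \<and> (\<forall>k. r k \<in> R)"
    using assms(3) unfolding lin1_def mem_Collect_eq .
  then obtain r0 r where a: "a = r0 + (\<Sum>k<n. r k * x k)" "r0 \<in> R" "\<forall>k. r k \<in> R"
    by blast
  have e: "(\<Sum>k<n. r k * X (ev k)) = (\<Sum>k<n. r k * x k)" by (rule sum.cong) (simp_all add: X_ev)
  have "a = r0 * X (\<lambda>_. 0) + (\<Sum>k<n. r k * X (ev k))"
    unfolding e X_zero a(1) by simp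
  then have "C a ?p = C (r0 * X (\<lambda>_. 0)) ?p + (\<Sum>k<n. C (r k * X (ev k)) ?p)"
    by (simp add: C_add C_sumf)
  moreover have "C (r0 * X (\<lambda>_. 0)) ?p = 0"
  proof -
    have "?p \<noteq> (\<lambda>_. 0)"
    proof
      assume "?p = (\<lambda>_. 0)"
      then show False using fun_cong[of ?p "\<lambda>_. 0" i] by (simp add: ev_def)
    qed
    then show ?thesis using C_X[OF a(2) zero_exps] by simp
  qed
  moreover have "C (r k * X (ev k)) ?p = 0" if "k < n" for k
  proof -
    have "?p \<noteq> ev k"
    proof
      assume h: "?p = ev k"
      have h1: "ev k i = 1" using fun_cong[OF h, of i] assms(1) by (simp add: ev_def)
      have h2: "ev k j = 1" using fun_cong[OF h, of j] assms(1) by (simp add: ev_def)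
      have "i = k" using h1 unfolding ev_def by (cases "i = k") simp_all
      moreover have "j = k" using h2 unfolding ev_def by (cases "j = k") simp_all
      ultimately show False using assms(1) by simp
    qed
    then show ?thesis using C_X[OF a(3)[rule_format] ev_exps[OF that]] by simp
  qed
  ultimately show ?thesis by simp
qed

lemma var_comm:
  assumes "i < j" "j < n"
  shows "cvar R x n i j \<in> R \<and> invertible_in R (cvar R x n i j) \<and> x j * x i = cvar R x n i j * x i * x j"
proof -
  have "\<forall>i<n. \<forall>j<n. \<exists>c\<in>R - {0}. x j * x i = c * x i * x j"
    using qcom by (simp add: quasi_commutative_def)
  then have "\<exists>c\<in>R - {0}. x j * x i = c * x i * x j" using assms less_trans[OF assms] by blast
  then obtain c where c: "c \<in> R - {0}" "x j * x i = c * x i * x j" by blast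
  have "cvar R x n i j = c" unfolding cvar_def
  proof (rule the1_equality)
    have c0: "x j * x i - c * x i * x j \<in> lin1 R x n"
      unfolding lin1_def mem_Collect_eq by (intro exI[of _ 0] exI[of _ "\<lambda>_. 0"]) (simp add: R0 c(2))
    show "\<exists>!c. c \<in> R - {0} \<and> x j * x i - c * x i * x j \<in> lin1 R x n"
    proof (rule ex1I[of _ c])
      show "c \<in> R - {0} \<and> x j * x i - c * x i * x j \<in> lin1 R x n" using c c0 by blast
      fix c' assume c': "c' \<in> R - {0} \<and> x j * x i - c' * x i * x j \<in> lin1 R x n"
      have "x j * x i - c' * x i * x j = (c - c') * X (\<lambda>t. ev i t + ev j t)"
        using c(2) assms by (simp add: mono_ev2 algebra_simps)
      then have "C ((c - c') * X (\<lambda>t. ev i t + ev j t)) (\<lambda>t. ev i t + ev j t) = 0"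
        using lin1_coeff[OF assms] c' by simp
      moreover have "c - c' \<in> R" using c c' Rdiff by blast
      ultimately have "c - c' = 0" using C_X[of "c - c'"] ev_add_exps assms by simp
      then show "c' = c" by simp
    qed
    show "c \<in> R - {0} \<and> x j * x i - c * x i * x j \<in> lin1 R x n" using c c0 by blast
  qed
  moreover have "invertible_in R (cvar R x n i j)" using bij assms unfolding bijective_ext_def by blast
  ultimately show ?thesis using c by simp
qed

definition iu where "iu u \<longleftrightarrow> u \<in> R \<and> invertible_in R u"

lemma iu_one: "iu 1" using R1 inv_one by (simp add: iu_def)
lemma iu_mult: "iu u \<Longrightarrow> iu v \<Longrightarrow> iu (u * v)" using Rmult inv_mult by (simp add: iu_def)
lemma iu_hom: "rhom h \<Longrightarrow> iu u \<Longrightarrow> iu (h u)" using rhom_R rhom_inv by (simp add: iu_def)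

lemma L0:
  assumes "j < k" "k < n"
  shows "\<exists>v. iu v \<and> x k * x j ^ b = v * x j ^ b * x k"
proof (induction b)
  case 0 then show ?case using iu_one by (intro exI[of _ 1]) simp
next
  case (Suc b)
  then obtain v where v: "iu v" "x k * x j ^ b = v * x j ^ b * x k" by blast
  let ?c = "cvar R x n j k"
  have c: "iu ?c" "x k * x j = ?c * x j * x k" using var_comm[OF assms] by (simp_all add: iu_def)
  have j: "j < n" using assms by simp
  have hc: "iu ((sig j ^^ b) ?c)" using iu_hom[OF rhom_pow[OF sig_rhom[OF j]] c(1)] .
  have "x k * x j ^ Suc b = (x k * x j ^ b) * x j" by (simp only: power_Suc2 mult.assoc)
  also have "\<dots> = v * x j ^ b * (x k * x j)" using v(2) by (simp add: mult.assoc)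
  also have "\<dots> = v * (x j ^ b * ?c) * x j * x k" using c(2) by (simp add: mult.assoc)
  also have "\<dots> = v * (sig j ^^ b) ?c * x j ^ Suc b * x k"
    using xpow_comm[OF j, of ?c b] c(1) by (simp add: iu_def mult.assoc power_Suc2 del: power_Suc)
  finally show ?case using iu_mult[OF v(1) hc] by blast
qed

lemma L1:
  assumes "k < n" "k' \<le> k"
  shows "\<exists>w. iu w \<and> x k * mono x k' \<beta> = w * mono x k' \<beta> * x k"
  using assms(2)
proof (induction k')
  case 0 then show ?case using iu_one by (intro exI[of _ 1]) simp
next
  case (Suc k')
  then obtain w where w: "iu w" "x k * mono x k' \<beta> = w * mono x k' \<beta> * x k" by simp blast
  obtain v where v: "iu v" "x k * x k' ^ \<beta> k' = v * x k' ^ \<beta> k' * x k" using L0[of k' k] Suc assms by auto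
  have kn: "k' \<le> n" using Suc assms by simp
  have hv: "iu (sigma_pow R x k' \<beta> v)" using iu_hom[OF sigma_pow_rhom[OF kn] v(1)] .
  have "x k * mono x (Suc k') \<beta> = (x k * mono x k' \<beta>) * x k' ^ \<beta> k'" by (simp add: mono_Suc mult.assoc)
  also have "\<dots> = w * mono x k' \<beta> * (x k * x k' ^ \<beta> k')" using w(2) by (simp add: mult.assoc)
  also have "\<dots> = w * (mono x k' \<beta> * v) * x k' ^ \<beta> k' * x k" using v(2) by (simp add: mult.assoc)
  also have "\<dots> = w * sigma_pow R x k' \<beta> v * mono x (Suc k') \<beta> * x k"
    using mono_comm[OF kn, of v \<beta>] v(1) by (simp add: iu_def mult.assoc mono_Suc)
  finally show ?case using iu_mult[OF w(1) hv] by blast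
qed

lemma L2:
  assumes "k < n"
  shows "\<exists>w. iu w \<and> x k ^ a * mono x k \<beta> = w * mono x k \<beta> * x k ^ a"
proof (induction a)
  case 0 then show ?case using iu_one by (intro exI[of _ 1]) simp
next
  case (Suc a)
  then obtain w where w: "iu w" "x k ^ a * mono x k \<beta> = w * mono x k \<beta> * x k ^ a" by blast
  obtain w1 where w1: "iu w1" "x k * mono x k \<beta> = w1 * mono x k \<beta> * x k" using L1[OF assms, of k] by auto
  have hw: "iu (sig k w)" using iu_hom[OF sig_rhom[OF assms] w(1)] .
  have "x k ^ Suc a * mono x k \<beta> = x k * (x k ^ a * mono x k \<beta>)" by (simp add: mult.assoc)
  also have "\<dots> = (x k * w) * mono x k \<beta> * x k ^ a" using w(2) by (simp add: mult.assoc)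
  also have "\<dots> = sig k w * (x k * mono x k \<beta>) * x k ^ a"
    using sig_prop[OF assms, of w] w(1) by (simp add: iu_def mult.assoc)
  also have "\<dots> = sig k w * w1 * mono x k \<beta> * x k ^ Suc a" using w1(2) by (simp add: mult.assoc)
  finally show ?case using iu_mult[OF hw w1(1)] by blast
qed

lemma mono_prod_k:
  assumes "k \<le> n"
  shows "\<exists>u. iu u \<and> mono x k \<gamma> * mono x k \<beta> = u * mono x k (\<lambda>t. \<gamma> t + \<beta> t)"
  using assms
proof (induction k)
  case 0 then show ?case using iu_one by (intro exI[of _ 1]) simp
next
  case (Suc k)
  then have kn: "k < n" "k \<le> n" by simp_all
  obtain u where u: "iu u" "mono x k \<gamma> * mono x k \<beta> = u * mono x k (\<lambda>t. \<gamma> t + \<beta> t)"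
    using Suc kn by blast
  obtain w where w: "iu w" "x k ^ \<gamma> k * mono x k \<beta> = w * mono x k \<beta> * x k ^ \<gamma> k"
    using L2[OF kn(1)] by blast
  have hw: "iu (sigma_pow R x k \<gamma> w)" using iu_hom[OF sigma_pow_rhom[OF kn(2)] w(1)] .
  have "mono x (Suc k) \<gamma> * mono x (Suc k) \<beta> = mono x k \<gamma> * (x k ^ \<gamma> k * mono x k \<beta>) * x k ^ \<beta> k"
    by (simp add: mono_Suc mult.assoc)
  also have "\<dots> = (mono x k \<gamma> * w) * mono x k \<beta> * (x k ^ \<gamma> k * x k ^ \<beta> k)"
    using w(2) by (simp add: mult.assoc)
  also have "\<dots> = sigma_pow R x k \<gamma> w * (mono x k \<gamma> * mono x k \<beta>) * x k ^ (\<gamma> k + \<beta> k)"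
    using mono_comm[OF kn(2), of w \<gamma>] w(1) by (simp add: iu_def mult.assoc power_add)
  also have "\<dots> = sigma_pow R x k \<gamma> w * u * mono x (Suc k) (\<lambda>t. \<gamma> t + \<beta> t)"
    using u(2) by (simp add: mult.assoc mono_Suc)
  finally show ?case using iu_mult[OF hw u(1)] by blast
qed

end


context qc begin

abbreviation sp where "sp \<gamma> \<equiv> sigma_pow R x n \<gamma>"
abbreviation pl :: "expo \<Rightarrow> expo \<Rightarrow> expo" where "pl \<gamma> \<beta> \<equiv> (\<lambda>t. \<gamma> t + \<beta> t)"

lemma pl_exps: "\<gamma> \<in> exps n \<Longrightarrow> \<beta> \<in> exps n \<Longrightarrow> pl \<gamma> \<beta> \<in> exps n" by (simp add: exps_def)

lemma sp_rhom: "rhom (sp \<gamma>)" using sigma_pow_rhom by simp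
lemma sp_bij: "bij_betw (sp \<gamma>) R R" using sigma_pow_bij by simp
lemma sp_R: "r \<in> R \<Longrightarrow> sp \<gamma> r \<in> R" using rhom_R[OF sp_rhom] .
lemma sp_zero: "sp \<gamma> 0 = 0" using rhom_zero[OF sp_rhom] .
lemma sp_inj: "r \<in> R \<Longrightarrow> s \<in> R \<Longrightarrow> sp \<gamma> r = sp \<gamma> s \<Longrightarrow> r = s"
  using sp_bij unfolding bij_betw_def inj_on_def by blast
lemma sp_nz: "r \<in> R \<Longrightarrow> r \<noteq> 0 \<Longrightarrow> sp \<gamma> r \<noteq> 0"
  using sp_inj[OF _ R0] sp_zero by metis
lemma X_comm: "r \<in> R \<Longrightarrow> X \<gamma> * r = sp \<gamma> r * X \<gamma>" using mono_comm by simp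

lemma iu_rinv: "iu u \<Longrightarrow> y * u = 0 \<Longrightarrow> y = 0"
proof -
  assume "iu u" "y * u = 0"
  then obtain v where v: "u * v = 1" unfolding iu_def invertible_in_def by blast
  have "y = y * u * v" using v by (simp add: mult.assoc)
  then show "y = 0" using \<open>y * u = 0\<close> by simp
qed

lemma cab_prop:
  assumes "\<gamma> \<in> exps n" "\<beta> \<in> exps n"
  shows "iu (cab R x n \<gamma> \<beta>) \<and> X \<gamma> * X \<beta> = cab R x n \<gamma> \<beta> * X (pl \<gamma> \<beta>)"
proof -
  obtain u where u: "iu u" "X \<gamma> * X \<beta> = u * X (pl \<gamma> \<beta>)" using mono_prod_k[of n] by blast
  have uR: "u \<in> R" using u(1) by (simp add: iu_def)
  have pe: "pl \<gamma> \<beta> \<in> exps n" using pl_exps assms .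
  have "cab R x n \<gamma> \<beta> = u" unfolding cab_def
  proof (rule the1_equality)
    let ?P = "\<lambda>c. c \<in> R \<and> (let p = X \<gamma> * X \<beta> - c * X (pl \<gamma> \<beta>)
      in p = 0 \<or> degA R x n p < tdeg n (pl \<gamma> \<beta>))"
    show "?P u" using uR u(2) by (simp add: Let_def)
    show "\<exists>!c. ?P c"
    proof (rule ex1I[of _ u])
      show "?P u" using uR u(2) by (simp add: Let_def)
      fix c assume c: "?P c"
      show "c = u"
      proof (rule ccontr)
        assume ne: "c \<noteq> u"
        have d: "u - c \<in> R" using c uR Rdiff by blast
        let ?p = "X \<gamma> * X \<beta> - c * X (pl \<gamma> \<beta>)"
        have p: "?p = (u - c) * X (pl \<gamma> \<beta>)" using u(2) by (simp add: algebra_simps)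
        have "suppA R x n ?p = {pl \<gamma> \<beta>}"
          unfolding suppA_def p C_single[OF d pe] using ne by auto
        then have "degA R x n ?p = tdeg n (pl \<gamma> \<beta>)" by (simp add: degA_def)
        moreover have "?p \<noteq> 0" unfolding p
        proof
          assume "(u - c) * X (pl \<gamma> \<beta>) = 0"
          then have "C ((u - c) * X (pl \<gamma> \<beta>)) (pl \<gamma> \<beta>) = 0" by (simp add: C_zero)
          then show False using C_single[OF d pe] ne by simp
        qed
        ultimately show False using c by (simp add: Let_def)
      qed
    qed
  qed
  then show ?thesis using u by simp
qed

lemma cab_iu: "\<gamma> \<in> exps n \<Longrightarrow> \<beta> \<in> exps n \<Longrightarrow> iu (cab R x n \<gamma> \<beta>)" using cab_prop by blast
lemma cab_R: "\<gamma> \<in> exps n \<Longrightarrow> \<beta> \<in> exps n \<Longrightarrow> cab R x n \<gamma> \<beta> \<in> R" using cab_iu by (simp add: iu_def)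
lemma X_mult: "\<gamma> \<in> exps n \<Longrightarrow> \<beta> \<in> exps n \<Longrightarrow> X \<gamma> * X \<beta> = cab R x n \<gamma> \<beta> * X (pl \<gamma> \<beta>)"
  using cab_prop by blast

lemma X_mult_r:
  assumes "\<gamma> \<in> exps n" "\<beta> \<in> exps n" "r \<in> R"
  shows "X \<gamma> * (r * X \<beta>) = sp \<gamma> r * cab R x n \<gamma> \<beta> * X (pl \<gamma> \<beta>)"
proof -
  have "X \<gamma> * (r * X \<beta>) = sp \<gamma> r * (X \<gamma> * X \<beta>)" using X_comm[OF assms(3)] by (simp add: mult.assoc[symmetric])
  then show ?thesis using X_mult[OF assms(1,2)] by (simp add: mult.assoc)
qed

lemma sp_comp:
  assumes "\<gamma> \<in> exps n" "\<beta> \<in> exps n" "b \<in> R"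
  shows "sp \<gamma> (sp \<beta> b) * cab R x n \<gamma> \<beta> = cab R x n \<gamma> \<beta> * sp (pl \<gamma> \<beta>) b"
proof -
  let ?c = "cab R x n \<gamma> \<beta>"
  have cR: "?c \<in> R" using cab_R assms by blast
  have "X \<gamma> * (X \<beta> * b) = X \<gamma> * (sp \<beta> b * X \<beta>)" using X_comm[OF assms(3)] by simp
  also have "\<dots> = sp \<gamma> (sp \<beta> b) * ?c * X (pl \<gamma> \<beta>)" using X_mult_r assms sp_R by blast
  finally have 1: "X \<gamma> * (X \<beta> * b) = sp \<gamma> (sp \<beta> b) * ?c * X (pl \<gamma> \<beta>)" .
  have "(X \<gamma> * X \<beta>) * b = ?c * (X (pl \<gamma> \<beta>) * b)" using X_mult[OF assms(1,2)] by (simp add: mult.assoc)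
  also have "\<dots> = ?c * sp (pl \<gamma> \<beta>) b * X (pl \<gamma> \<beta>)" using X_comm[OF assms(3)] by (simp add: mult.assoc)
  finally have 2: "(X \<gamma> * X \<beta>) * b = ?c * sp (pl \<gamma> \<beta>) b * X (pl \<gamma> \<beta>)" .
  have "sp \<gamma> (sp \<beta> b) * ?c * X (pl \<gamma> \<beta>) = ?c * sp (pl \<gamma> \<beta>) b * X (pl \<gamma> \<beta>)"
    using 1 2 by (simp add: mult.assoc)
  then show ?thesis
    using single_inj[OF Rmult[OF sp_R[OF sp_R[OF assms(3)]] cR] Rmult[OF cR sp_R[OF assms(3)]] pl_exps[OF assms(1,2)]]
    by blast
qed

end


context qc begin

definition dle :: "expo \<Rightarrow> expo \<Rightarrow> bool" where "dle \<gamma> \<delta> \<longleftrightarrow> (\<forall>k. \<gamma> k \<le> \<delta> k)"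
abbreviation mi :: "expo \<Rightarrow> expo \<Rightarrow> expo" where "mi \<delta> \<gamma> \<equiv> (\<lambda>k. \<delta> k - \<gamma> k)"

lemma pl_mi: "dle \<gamma> \<delta> \<Longrightarrow> pl \<gamma> (mi \<delta> \<gamma>) = \<delta>" by (simp add: dle_def fun_eq_iff)
lemma mi_pl: "mi (pl \<gamma> \<beta>) \<gamma> = \<beta>" by simp
lemma dle_pl: "dle \<gamma> (pl \<gamma> \<beta>)" by (simp add: dle_def)

definition mulc :: "expo \<Rightarrow> 'a \<Rightarrow> expo \<Rightarrow> 'a" where
  "mulc \<gamma> a \<delta> = (if dle \<gamma> \<delta> \<and> C a (mi \<delta> \<gamma>) \<noteq> 0 then sp \<gamma> (C a (mi \<delta> \<gamma>)) * cab R x n \<gamma> (mi \<delta> \<gamma>) else 0)"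

lemma C_mulX:
  assumes g: "\<gamma> \<in> exps n"
  shows "C (X \<gamma> * a) = mulc \<gamma> a"
proof (rule C_intro[where S = "pl \<gamma> ` {\<beta>. C a \<beta> \<noteq> 0}"])
  let ?Z = "{\<beta>. C a \<beta> \<noteq> 0}"
  let ?W = "pl \<gamma> ` ?Z"
  show "finite ?W" using C_fin by simp
  show "?W \<subseteq> exps n" using C_exps pl_exps[OF g] by blast
  show "mulc \<gamma> a \<delta> \<in> R" for \<delta>
  proof (cases "dle \<gamma> \<delta> \<and> C a (mi \<delta> \<gamma>) \<noteq> 0")
    case True
    then have "mi \<delta> \<gamma> \<in> exps n" using C_exps by blast
    then have "sp \<gamma> (C a (mi \<delta> \<gamma>)) * cab R x n \<gamma> (mi \<delta> \<gamma>) \<in> R"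
      using Rmult[OF sp_R[OF C_R] cab_R[OF g]] by blast
    then show ?thesis using True unfolding mulc_def by simp
  next
    case False show ?thesis unfolding mulc_def if_not_P[OF False] by (rule R0)
  qed
  show "\<delta> \<notin> ?W \<Longrightarrow> mulc \<gamma> a \<delta> = 0" for \<delta>
  proof -
    assume "\<delta> \<notin> ?W"
    have "\<not> (dle \<gamma> \<delta> \<and> C a (mi \<delta> \<gamma>) \<noteq> 0)"
    proof
      assume h: "dle \<gamma> \<delta> \<and> C a (mi \<delta> \<gamma>) \<noteq> 0"
      then have "pl \<gamma> (mi \<delta> \<gamma>) \<in> ?W" by (intro imageI) simp
      then show False using pl_mi h \<open>\<delta> \<notin> ?W\<close> by simp
    qed
    then show ?thesis unfolding mulc_def by (simp only: if_not_P if_False)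
  qed
  have inj: "inj_on (pl \<gamma>) ?Z" unfolding inj_on_def by (simp add: fun_eq_iff)
  have "X \<gamma> * a = X \<gamma> * (\<Sum>\<beta>\<in>?Z. C a \<beta> * X \<beta>)" using C_sum[of a] by simp
  also have "\<dots> = (\<Sum>\<beta>\<in>?Z. sp \<gamma> (C a \<beta>) * cab R x n \<gamma> \<beta> * X (pl \<gamma> \<beta>))"
    unfolding sum_distrib_left
  proof (rule sum.cong)
    fix \<beta> assume "\<beta> \<in> ?Z"
    then have "\<beta> \<in> exps n" using C_exps by simp
    then show "X \<gamma> * (C a \<beta> * X \<beta>) = sp \<gamma> (C a \<beta>) * cab R x n \<gamma> \<beta> * X (pl \<gamma> \<beta>)"
      using X_mult_r[OF g _ C_R] by blast
  qed simp
  also have "\<dots> = (\<Sum>\<beta>\<in>?Z. mulc \<gamma> a (pl \<gamma> \<beta>) * X (pl \<gamma> \<beta>))"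
  proof (rule sum.cong)
    fix \<beta> assume "\<beta> \<in> ?Z"
    then show "sp \<gamma> (C a \<beta>) * cab R x n \<gamma> \<beta> * X (pl \<gamma> \<beta>) = mulc \<gamma> a (pl \<gamma> \<beta>) * X (pl \<gamma> \<beta>)"
      unfolding mulc_def using dle_pl[of \<gamma> \<beta>] by simp
  qed simp
  also have "\<dots> = (\<Sum>\<delta>\<in>?W. mulc \<gamma> a \<delta> * X \<delta>)"
    using sum.reindex[OF inj, of "\<lambda>\<delta>. mulc \<gamma> a \<delta> * X \<delta>"] by simp
  finally show "X \<gamma> * a = (\<Sum>\<delta>\<in>?W. mulc \<gamma> a \<delta> * X \<delta>)" .
qed

lemma C_mulX_at:
  assumes "\<gamma> \<in> exps n" "\<beta> \<in> exps n"
  shows "C (X \<gamma> * a) (pl \<gamma> \<beta>) = sp \<gamma> (C a \<beta>) * cab R x n \<gamma> \<beta>"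
  using C_mulX[OF assms(1)] sp_zero by (simp add: mulc_def dle_pl)

lemma C_mulX_nz:
  assumes "\<gamma> \<in> exps n" "\<beta> \<in> exps n"
  shows "C (X \<gamma> * a) (pl \<gamma> \<beta>) \<noteq> 0 \<longleftrightarrow> C a \<beta> \<noteq> 0"
proof
  assume "C a \<beta> \<noteq> 0"
  then have "sp \<gamma> (C a \<beta>) \<noteq> 0" using sp_nz C_R by blast
  then show "C (X \<gamma> * a) (pl \<gamma> \<beta>) \<noteq> 0"
    using C_mulX_at[OF assms] iu_rinv[OF cab_iu[OF assms]] by auto
next
  assume "C (X \<gamma> * a) (pl \<gamma> \<beta>) \<noteq> 0"
  then show "C a \<beta> \<noteq> 0" using C_mulX_at[OF assms] sp_zero by auto
qed

lemma C_mulX_supp: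
  assumes "\<gamma> \<in> exps n" "C (X \<gamma> * a) \<delta> \<noteq> 0"
  shows "\<exists>\<beta>. \<delta> = pl \<gamma> \<beta> \<and> C a \<beta> \<noteq> 0"
proof -
  have "mulc \<gamma> a \<delta> \<noteq> 0" using assms C_mulX[OF assms(1)] by simp
  then have h: "dle \<gamma> \<delta> \<and> C a (mi \<delta> \<gamma>) \<noteq> 0"
    unfolding mulc_def by (cases "dle \<gamma> \<delta> \<and> C a (mi \<delta> \<gamma>) \<noteq> 0") simp_all
  then have "\<delta> = pl \<gamma> (mi \<delta> \<gamma>)" using pl_mi by simp
  then show ?thesis using h by (intro exI[of _ "mi \<delta> \<gamma>"]) simp
qed

end


lemma tord_refl: "total_order_on D le \<Longrightarrow> a \<in> D \<Longrightarrow> le a a"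
  unfolding total_order_on_def by blast
lemma tord_antisym: "total_order_on D le \<Longrightarrow> a \<in> D \<Longrightarrow> b \<in> D \<Longrightarrow> le a b \<Longrightarrow> le b a \<Longrightarrow> a = b"
  unfolding total_order_on_def by blast
lemma tord_trans: "total_order_on D le \<Longrightarrow> a \<in> D \<Longrightarrow> b \<in> D \<Longrightarrow> c \<in> D \<Longrightarrow> le a b \<Longrightarrow> le b c \<Longrightarrow> le a c"
  unfolding total_order_on_def by blast
lemma tord_total: "total_order_on D le \<Longrightarrow> a \<in> D \<Longrightarrow> b \<in> D \<Longrightarrow> le a b \<or> le b a"
  unfolding total_order_on_def by blast

lemma total_max:
  assumes "total_order_on D le" "finite S" "S \<noteq> {}" "S \<subseteq> D"
  shows "\<exists>X\<in>S. \<forall>Y\<in>S. le Y X"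
  using assms(2,3,4)
proof (induction S rule: finite_ne_induct)
  case (singleton x) then show ?case using tord_refl[OF assms(1)] by simp
next
  case (insert x F)
  then obtain X where X: "X \<in> F" "\<forall>Y\<in>F. le Y X" by blast
  have xD: "x \<in> D" "X \<in> D" using insert X by auto
  show ?case
  proof (cases "le x X")
    case True then show ?thesis using X by blast
  next
    case False
    then have "le X x" using tord_total[OF assms(1) xD] by blast
    have all: "\<forall>Y\<in>F. le Y x"
    proof
      fix Y assume "Y \<in> F"
      then have "le Y X" "Y \<in> D" using X insert by auto
      then show "le Y x" using \<open>le X x\<close> tord_trans[OF assms(1) _ xD(2) xD(1)] by blast
    qed
    have "le x x" using tord_refl[OF assms(1) xD(1)] .
    then show ?thesis using all by blast
  qed
qed

locale qcv = qc R x n for R :: "'a::ring_1 set" and x n +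
  fixes m :: nat and le :: "expo \<Rightarrow> expo \<Rightarrow> bool" and lem :: "expo \<times> nat \<Rightarrow> expo \<times> nat \<Rightarrow> bool"
  assumes moA: "monomial_order_A R x n le" and moAm: "monomial_order_Am R x n le m lem"
    and nt: "(1::'a) \<noteq> 0"
begin

abbreviation sV where "sV \<equiv> suppV R x n m"
abbreviation lmv where "lmv \<equiv> lmV R x n m lem"
abbreviation lcv where "lcv \<equiv> lcV R x n m lem"

lemma tot: "total_order_on (mons n m) lem" using moAm by (simp add: monomial_order_Am_def)
lemma totA: "total_order_on (exps n) le" using moA by (simp add: monomial_order_A_def)

lemma sV_mons: "sV f \<subseteq> mons n m"
  unfolding suppV_def mons_def using C_exps by auto

lemma sV_fin: "finite (sV f)"
proof -
  have "sV f \<subseteq> (\<Union>i<m. {\<alpha>. C (f i) \<alpha> \<noteq> 0} \<times> {i})" unfolding suppV_def by auto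
  moreover have "finite (\<Union>i<m. {\<alpha>. C (f i) \<alpha> \<noteq> 0} \<times> {i})" using C_fin by auto
  ultimately show ?thesis by (rule finite_subset)
qed

lemma sV_ne: "f \<in> vecs m \<Longrightarrow> f \<noteq> (\<lambda>_. 0) \<Longrightarrow> sV f \<noteq> {}"
proof -
  assume f: "f \<in> vecs m" "f \<noteq> (\<lambda>_. 0)"
  then obtain i where i: "f i \<noteq> 0" by auto
  have "i < m"
  proof (rule ccontr)
    assume "\<not> i < m"
    then have "f i = 0" using f(1) unfolding vecs_def by simp
    then show False using i by simp
  qed
  from i have "C (f i) \<noteq> (\<lambda>_. 0)" using C_zero_iff by blast
  then obtain \<alpha> where "C (f i) \<alpha> \<noteq> 0" by auto
  then have "(\<alpha>, i) \<in> sV f" using \<open>i < m\<close> by (simp add: suppV_def)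
  then show ?thesis by blast
qed

lemma lmv_char:
  assumes "Z \<in> sV f" "\<forall>Y\<in>sV f. lem Y Z"
  shows "lmv f = Z"
  unfolding lmV_def
proof (rule the1_equality)
  show "\<exists>!X. X \<in> sV f \<and> (\<forall>Y\<in>sV f. lem Y X)"
  proof (rule ex1I[of _ Z])
    show "Z \<in> sV f \<and> (\<forall>Y\<in>sV f. lem Y Z)" using assms by blast
    fix X assume X: "X \<in> sV f \<and> (\<forall>Y\<in>sV f. lem Y X)"
    then have "lem X Z" "lem Z X" using assms by blast+
    moreover have "X \<in> mons n m" "Z \<in> mons n m" using X assms sV_mons by blast+
    ultimately show "X = Z" using tord_antisym[OF tot] by blast
  qed
  show "Z \<in> sV f \<and> (\<forall>Y\<in>sV f. lem Y Z)" using assms by blast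
qed

lemma lmv_prop:
  assumes "f \<in> vecs m" "f \<noteq> (\<lambda>_. 0)"
  shows "lmv f \<in> sV f \<and> (\<forall>Y\<in>sV f. lem Y (lmv f))"
proof -
  obtain Z where "Z \<in> sV f" "\<forall>Y\<in>sV f. lem Y Z"
    using total_max[OF tot sV_fin sV_ne[OF assms] sV_mons] by blast
  then show ?thesis using lmv_char by simp
qed

lemma lcv_def2: "lcv f = C (f (snd (lmv f))) (fst (lmv f))"
  by (simp add: lcV_def Let_def)

lemma lcv_nz:
  assumes "f \<in> vecs m" "f \<noteq> (\<lambda>_. 0)"
  shows "lcv f \<noteq> 0"
proof -
  have "lmv f \<in> sV f" using lmv_prop[OF assms] by blast
  then show ?thesis unfolding lcv_def2 suppV_def by auto
qed

lemma lcv_R: "lcv f \<in> R" unfolding lcv_def2 by (rule C_R)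

lemma lmv_mons: "f \<in> vecs m \<Longrightarrow> f \<noteq> (\<lambda>_. 0) \<Longrightarrow> lmv f \<in> mons n m"
  using lmv_prop sV_mons by blast

lemma C_X1: "\<alpha> \<in> exps n \<Longrightarrow> C (X \<alpha>) = (\<lambda>\<beta>. if \<beta> = \<alpha> then 1 else 0)"
  using C_single[OF R1] by simp

lemma lmA_prod:
  assumes "\<gamma> \<in> exps n" "\<alpha> \<in> exps n"
  shows "lmA R x n le (X \<gamma> * X \<alpha>) = pl \<gamma> \<alpha>"
proof -
  have "suppA R x n (X \<gamma> * X \<alpha>) = {pl \<gamma> \<alpha>}"
  proof
    show "suppA R x n (X \<gamma> * X \<alpha>) \<subseteq> {pl \<gamma> \<alpha>}"
    proof
      fix \<delta> assume "\<delta> \<in> suppA R x n (X \<gamma> * X \<alpha>)"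
      then have "C (X \<gamma> * X \<alpha>) \<delta> \<noteq> 0" by (simp add: suppA_def)
      then obtain \<beta> where "\<delta> = pl \<gamma> \<beta>" "C (X \<alpha>) \<beta> \<noteq> 0" using C_mulX_supp[OF assms(1)] by blast
      then show "\<delta> \<in> {pl \<gamma> \<alpha>}" using C_X1[OF assms(2)] by (simp split: if_splits)
    qed
    have "C (X \<alpha>) \<alpha> \<noteq> 0" using C_X1[OF assms(2)] nt by simp
    then show "{pl \<gamma> \<alpha>} \<subseteq> suppA R x n (X \<gamma> * X \<alpha>)"
      using C_mulX_nz[OF assms] by (simp add: suppA_def)
  qed
  moreover have "le (pl \<gamma> \<alpha>) (pl \<gamma> \<alpha>)" using tord_refl[OF totA pl_exps[OF assms]] .
  ultimately show ?thesis unfolding lmA_def by (intro the_equality) auto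
qed

lemma lem_shift:
  assumes "\<gamma> \<in> exps n" "\<alpha> \<in> exps n" "\<beta> \<in> exps n" "i < m" "j < m" "lem (\<alpha>, i) (\<beta>, j)"
  shows "lem (pl \<gamma> \<alpha>, i) (pl \<gamma> \<beta>, j)"
proof -
  have "\<forall>\<alpha>\<in>exps n. \<forall>\<beta>\<in>exps n. \<forall>\<gamma>\<in>exps n. \<forall>i<m. \<forall>j<m. lem (\<alpha>, i) (\<beta>, j) \<longrightarrow>
        lem (lmA R x n le (X \<gamma> * X \<alpha>), i) (lmA R x n le (X \<gamma> * X \<beta>), j)"
    using moAm by (simp add: monomial_order_Am_def)
  then have "lem (lmA R x n le (X \<gamma> * X \<alpha>), i) (lmA R x n le (X \<gamma> * X \<beta>), j)"
    using assms by blast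
  then show ?thesis using lmA_prod assms by simp
qed

definition mulv :: "expo \<Rightarrow> (nat \<Rightarrow> 'a) \<Rightarrow> (nat \<Rightarrow> 'a)" where "mulv \<gamma> g = (\<lambda>i. X \<gamma> * g i)"

lemma sV_mulv:
  assumes "\<gamma> \<in> exps n"
  shows "sV (mulv \<gamma> g) = (\<lambda>(\<alpha>, i). (pl \<gamma> \<alpha>, i)) ` sV g"
proof
  show "sV (mulv \<gamma> g) \<subseteq> (\<lambda>(\<alpha>, i). (pl \<gamma> \<alpha>, i)) ` sV g"
  proof
    fix Z assume "Z \<in> sV (mulv \<gamma> g)"
    then obtain \<delta> i where Z: "Z = (\<delta>, i)" "i < m" "C (X \<gamma> * g i) \<delta> \<noteq> 0"
      by (auto simp: suppV_def mulv_def)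
    then obtain \<beta> where "\<delta> = pl \<gamma> \<beta>" "C (g i) \<beta> \<noteq> 0" using C_mulX_supp[OF assms] by blast
    then show "Z \<in> (\<lambda>(\<alpha>, i). (pl \<gamma> \<alpha>, i)) ` sV g" using Z by (auto simp: suppV_def)
  qed
  show "(\<lambda>(\<alpha>, i). (pl \<gamma> \<alpha>, i)) ` sV g \<subseteq> sV (mulv \<gamma> g)"
  proof
    fix Z assume "Z \<in> (\<lambda>(\<alpha>, i). (pl \<gamma> \<alpha>, i)) ` sV g"
    then obtain \<beta> i where Z: "Z = (pl \<gamma> \<beta>, i)" "i < m" "C (g i) \<beta> \<noteq> 0" by (auto simp: suppV_def)
    then have "\<beta> \<in> exps n" using C_exps by blast
    then have "C (X \<gamma> * g i) (pl \<gamma> \<beta>) \<noteq> 0" using C_mulX_nz[OF assms] Z by blast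
    then show "Z \<in> sV (mulv \<gamma> g)" using Z by (simp add: suppV_def mulv_def)
  qed
qed

lemma mulv_vecs: "g \<in> vecs m \<Longrightarrow> mulv \<gamma> g \<in> vecs m" by (simp add: vecs_def mulv_def)

lemma lm_mulv:
  assumes g: "g \<in> vecs m" "g \<noteq> (\<lambda>_. 0)" and gam: "\<gamma> \<in> exps n"
  shows "lmv (mulv \<gamma> g) = (pl \<gamma> (fst (lmv g)), snd (lmv g))
     \<and> lcv (mulv \<gamma> g) = sp \<gamma> (lcv g) * cab R x n \<gamma> (fst (lmv g))"
proof -
  obtain \<beta> i where lm: "lmv g = (\<beta>, i)" by fastforce
  have P: "(\<beta>, i) \<in> sV g" "\<forall>Y\<in>sV g. lem Y (\<beta>, i)" using lmv_prop[OF g] lm by auto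
  have bi: "\<beta> \<in> exps n" "i < m" using P(1) sV_mons by (auto simp: mons_def)
  have "lmv (mulv \<gamma> g) = (pl \<gamma> \<beta>, i)"
  proof (rule lmv_char)
    show "(pl \<gamma> \<beta>, i) \<in> sV (mulv \<gamma> g)" unfolding sV_mulv[OF gam] using P(1) by force
    show "\<forall>Y\<in>sV (mulv \<gamma> g). lem Y (pl \<gamma> \<beta>, i)"
    proof
      fix Y assume "Y \<in> sV (mulv \<gamma> g)"
      then obtain \<alpha> j where Y: "Y = (pl \<gamma> \<alpha>, j)" "(\<alpha>, j) \<in> sV g" unfolding sV_mulv[OF gam] by auto
      then have aj: "\<alpha> \<in> exps n" "j < m" using sV_mons by (auto simp: mons_def)
      have "lem (\<alpha>, j) (\<beta>, i)" using P(2) Y(2) by blast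
      then show "lem Y (pl \<gamma> \<beta>, i)" using lem_shift[OF gam aj(1) bi(1) aj(2) bi(2)] Y(1) by simp
    qed
  qed
  moreover have "lcv (mulv \<gamma> g) = sp \<gamma> (lcv g) * cab R x n \<gamma> \<beta>"
    using calculation unfolding lcv_def2 lm using C_mulX_at[OF gam bi(1)] by (simp add: mulv_def)
  ultimately show ?thesis using lm by simp
qed

end


locale qcm = qcv R x n m le lem for R :: "'a::ring_1 set" and x n m le lem +
  fixes M :: "(nat \<Rightarrow> 'a) set"
  assumes sm: "submodule m M"
begin

lemma M_vecs: "f \<in> M \<Longrightarrow> f \<in> vecs m" using sm by (auto simp: submodule_def)
lemma M_add: "f \<in> M \<Longrightarrow> g \<in> M \<Longrightarrow> (\<lambda>i. f i + g i) \<in> M" using sm by (simp add: submodule_def)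
lemma M_smult: "f \<in> M \<Longrightarrow> (\<lambda>i. a * f i) \<in> M" using sm by (simp add: submodule_def)
lemma M_mulv: "f \<in> M \<Longrightarrow> mulv \<gamma> f \<in> M" unfolding mulv_def by (rule M_smult)

lemma nz_of_lcv: "lcv h \<noteq> 0 \<Longrightarrow> h \<noteq> (\<lambda>_. 0)"
  unfolding lcv_def2 using C_zero by auto

lemma lm_add:
  assumes f: "f \<in> vecs m" "f \<noteq> (\<lambda>_. 0)" and g: "g \<in> vecs m" "g \<noteq> (\<lambda>_. 0)"
    and eq: "lmv f = Z" "lmv g = Z" and nz: "lcv f + lcv g \<noteq> 0"
  shows "lmv (\<lambda>i. f i + g i) = Z \<and> lcv (\<lambda>i. f i + g i) = lcv f + lcv g"
proof -
  let ?h = "\<lambda>i. f i + g i"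
  have sub: "sV ?h \<subseteq> sV f \<union> sV g" unfolding suppV_def by (auto simp: C_add)
  have cZ: "C (?h (snd Z)) (fst Z) = lcv f + lcv g" using eq by (simp add: lcv_def2 C_add)
  have "lmv ?h = Z"
  proof (rule lmv_char)
    have "snd Z < m" using lmv_mons[OF f] eq by (auto simp: mons_def)
    then show "Z \<in> sV ?h" using cZ nz by (cases Z) (simp add: suppV_def)
    have pf: "\<forall>Y\<in>sV f. lem Y Z" using lmv_prop[OF f] eq(1) by simp
    have pg: "\<forall>Y\<in>sV g. lem Y Z" using lmv_prop[OF g] eq(2) by simp
    show "\<forall>Y\<in>sV ?h. lem Y Z" using sub pf pg by blast
  qed
  then show ?thesis using cZ by (simp add: lcv_def2)
qed

lemma lm_smult:
  assumes f: "f \<in> vecs m" "f \<noteq> (\<lambda>_. 0)" and r: "r \<in> R" and nz: "r * lcv f \<noteq> 0"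
  shows "lmv (\<lambda>i. r * f i) = lmv f \<and> lcv (\<lambda>i. r * f i) = r * lcv f"
proof -
  let ?h = "\<lambda>i. r * f i"
  have sub: "sV ?h \<subseteq> sV f" unfolding suppV_def by (auto simp: C_lmult[OF r])
  have cZ: "C (?h (snd (lmv f))) (fst (lmv f)) = r * lcv f" by (simp add: lcv_def2 C_lmult[OF r])
  have "lmv ?h = lmv f"
  proof (rule lmv_char)
    have "snd (lmv f) < m" using lmv_mons[OF f] by (auto simp: mons_def)
    then show "lmv f \<in> sV ?h" using cZ nz by (cases "lmv f") (simp add: suppV_def)
    show "\<forall>Y\<in>sV ?h. lem Y (lmv f)" using sub lmv_prop[OF f] by blast
  qed
  then show ?thesis using cZ by (simp add: lcv_def2)
qed

definition J :: "expo \<times> nat \<Rightarrow> 'a set" where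
  "J Z = {lcv f | f. f \<in> M \<and> f \<noteq> (\<lambda>_. 0) \<and> lmv f = Z} \<union> {0}"

lemma J_cases: "a \<in> J Z \<Longrightarrow> a = 0 \<or> (\<exists>f. f \<in> M \<and> f \<noteq> (\<lambda>_. 0) \<and> lmv f = Z \<and> lcv f = a)"
  unfolding J_def by blast

lemma J_intro: "f \<in> M \<Longrightarrow> f \<noteq> (\<lambda>_. 0) \<Longrightarrow> lmv f = Z \<Longrightarrow> lcv f \<in> J Z"
  unfolding J_def by blast

lemma J_zero: "0 \<in> J Z" unfolding J_def by blast

lemma J_R: "a \<in> J Z \<Longrightarrow> a \<in> R" using J_cases lcv_R R0 by blast

lemma J_add: "a \<in> J Z \<Longrightarrow> b \<in> J Z \<Longrightarrow> a + b \<in> J Z"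
proof -
  assume a: "a \<in> J Z" and b: "b \<in> J Z"
  show "a + b \<in> J Z"
  proof (cases "a = 0")
    case True then show ?thesis using b by simp
  next
    case an: False
    show ?thesis
    proof (cases "b = 0")
      case True then show ?thesis using a by simp
    next
      case bn: False
      show ?thesis
      proof (cases "a + b = 0")
        case True then show ?thesis using J_zero by simp
      next
        case False
        obtain f where f: "f \<in> M" "f \<noteq> (\<lambda>_. 0)" "lmv f = Z" "lcv f = a" using J_cases[OF a] an by blast
        obtain g where g: "g \<in> M" "g \<noteq> (\<lambda>_. 0)" "lmv g = Z" "lcv g = b" using J_cases[OF b] bn by blast
        have "lmv (\<lambda>i. f i + g i) = Z \<and> lcv (\<lambda>i. f i + g i) = a + b"
          using lm_add[OF M_vecs[OF f(1)] f(2) M_vecs[OF g(1)] g(2) f(3) g(3)] f(4) g(4) False by simp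
        moreover have "(\<lambda>i. f i + g i) \<noteq> (\<lambda>_. 0)" using calculation False nz_of_lcv by auto
        ultimately show ?thesis using J_intro[OF M_add[OF f(1) g(1)]] by metis
      qed
    qed
  qed
qed

lemma J_smult: "r \<in> R \<Longrightarrow> a \<in> J Z \<Longrightarrow> r * a \<in> J Z"
proof -
  assume r: "r \<in> R" and a: "a \<in> J Z"
  show "r * a \<in> J Z"
  proof (cases "r * a = 0")
    case True then show ?thesis using J_zero by simp
  next
    case False
    then have an: "a \<noteq> 0" by auto
    obtain f where f: "f \<in> M" "f \<noteq> (\<lambda>_. 0)" "lmv f = Z" "lcv f = a" using J_cases[OF a] an by blast
    have "lmv (\<lambda>i. r * f i) = Z \<and> lcv (\<lambda>i. r * f i) = r * a"
      using lm_smult[OF M_vecs[OF f(1)] f(2) r] f(3,4) False by simp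
    moreover have "(\<lambda>i. r * f i) \<noteq> (\<lambda>_. 0)" using calculation False nz_of_lcv by auto
    ultimately show ?thesis using J_intro[OF M_smult[OF f(1)]] by metis
  qed
qed

definition K :: "nat \<Rightarrow> expo \<Rightarrow> 'a set" where
  "K i \<alpha> = {b \<in> R. sp \<alpha> b \<in> J (\<alpha>, i)}"

lemma K_ideal: "left_ideal R (K i \<alpha>)"
  unfolding left_ideal_def
proof (intro conjI ballI)
  show "K i \<alpha> \<subseteq> R" by (auto simp: K_def)
  show "0 \<in> K i \<alpha>" using R0 sp_zero J_zero by (simp add: K_def)
  fix a b assume "a \<in> K i \<alpha>" "b \<in> K i \<alpha>"
  then show "a + b \<in> K i \<alpha>"
    using rhom_add[OF sp_rhom] J_add Radd by (simp add: K_def)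
next
  fix r a assume "r \<in> R" "a \<in> K i \<alpha>"
  then show "r * a \<in> K i \<alpha>"
    using rhom_mult[OF sp_rhom] J_smult sp_R Rmult by (simp add: K_def)
qed

lemma K_mono:
  assumes "\<alpha> \<in> exps n" "\<beta> \<in> exps n" "dle \<alpha> \<beta>"
  shows "K i \<alpha> \<subseteq> K i \<beta>"
proof
  fix b assume b: "b \<in> K i \<alpha>"
  then have bR: "b \<in> R" and bJ: "sp \<alpha> b \<in> J (\<alpha>, i)" by (auto simp: K_def)
  show "b \<in> K i \<beta>"
  proof (cases "b = 0")
    case True then show ?thesis using K_ideal unfolding left_ideal_def by blast
  next
    case False
    then have "sp \<alpha> b \<noteq> 0" using sp_nz bR by blast
    then obtain g where g: "g \<in> M" "g \<noteq> (\<lambda>_. 0)" "lmv g = (\<alpha>, i)" "lcv g = sp \<alpha> b"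
      using J_cases[OF bJ] by blast
    let ?\<gamma> = "mi \<beta> \<alpha>"
    have gam: "?\<gamma> \<in> exps n" using assms(2) by (simp add: exps_def)
    have pg: "pl ?\<gamma> \<alpha> = \<beta>" using pl_mi[OF assms(3)] by (simp add: fun_eq_iff add.commute)
    let ?c = "cab R x n ?\<gamma> \<alpha>"
    have lm: "lmv (mulv ?\<gamma> g) = (\<beta>, i)" "lcv (mulv ?\<gamma> g) = sp ?\<gamma> (sp \<alpha> b) * ?c"
      using lm_mulv[OF M_vecs[OF g(1)] g(2) gam] g(3,4) pg by simp_all
    have lc2: "lcv (mulv ?\<gamma> g) = ?c * sp \<beta> b"
      using lm(2) sp_comp[OF gam assms(1) bR] pg by simp
    have "sp ?\<gamma> (sp \<alpha> b) \<noteq> 0" using sp_nz sp_R bR \<open>sp \<alpha> b \<noteq> 0\<close> by blast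
    then have "lcv (mulv ?\<gamma> g) \<noteq> 0" using lm(2) iu_rinv[OF cab_iu[OF gam assms(1)]] by auto
    then have "?c * sp \<beta> b \<in> J (\<beta>, i)"
      using J_intro[OF M_mulv[OF g(1)] nz_of_lcv lm(1)] lc2 by simp
    moreover obtain v where v: "v \<in> R" "v * ?c = 1"
      using cab_iu[OF gam assms(1)] unfolding iu_def invertible_in_def by blast
    ultimately have "v * (?c * sp \<beta> b) \<in> J (\<beta>, i)" using J_smult by blast
    then have "sp \<beta> b \<in> J (\<beta>, i)" using v(2) by (simp add: mult.assoc[symmetric])
    then show ?thesis using bR by (simp add: K_def)
  qed
qed

end


context qc begin
lemma rhom_sum:
  assumes h: "rhom h" and "finite A" "\<And>a. a \<in> A \<Longrightarrow> g a \<in> R"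
  shows "h (\<Sum>a\<in>A. g a) = (\<Sum>a\<in>A. h (g a))"
  using assms(2,3)
proof (induction A rule: finite_induct)
  case empty then show ?case using rhom_zero[OF h] by simp
next
  case (insert a A)
  have "g a \<in> R" "(\<Sum>a\<in>A. g a) \<in> R" using insert Rsum by auto
  then show ?case using insert rhom_add[OF h] by simp
qed
end

context qcm begin

lemma gb_exists:
  assumes noeth: "left_noetherian R"
  shows "\<exists>G. groebner_basis R x n m lem M G"
proof (cases "M = {\<lambda>_. 0}")
  case True then show ?thesis unfolding groebner_basis_def by simp
next
  case Mnz: False
  have "(\<lambda>_. 0) \<in> M" using sm by (simp add: submodule_def)
  then obtain f0 where f0: "f0 \<in> M" "f0 \<noteq> (\<lambda>_. 0)" using Mnz by blast
  have "\<forall>i. \<exists>F. finite F \<and> F \<subseteq> exps n \<and> (\<forall>Y\<in>exps n. K i Y \<subseteq> Sp (K i) F Y)"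
  proof
    fix i
    show "\<exists>F. finite F \<and> F \<subseteq> exps n \<and> (\<forall>Y\<in>exps n. K i Y \<subseteq> Sp (K i) F Y)"
    proof (rule hilbert_family[OF noeth])
      show "\<forall>Y\<in>exps n. left_ideal R (K i Y)" using K_ideal by blast
      show "\<forall>X\<in>exps n. \<forall>Y\<in>exps n. (\<forall>k. X k \<le> Y k) \<longrightarrow> K i X \<subseteq> K i Y"
        using K_mono by (simp add: dle_def)
    qed
  qed
  then obtain F where F: "\<And>i. finite (F i)" "\<And>i. F i \<subseteq> exps n"
      "\<And>i Y. Y \<in> exps n \<Longrightarrow> K i Y \<subseteq> Sp (K i) (F i) Y"
    by metis
  have "\<forall>i X. \<exists>S. finite S \<and> S \<subseteq> K i X \<and> K i X = {\<Sum>s\<in>S. r s * s | r. \<forall>s. r s \<in> R}"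
  proof (intro allI)
    fix i X
    have "\<forall>I. left_ideal R I \<longrightarrow> (\<exists>S. finite S \<and> S \<subseteq> I \<and> I = {\<Sum>s\<in>S. r s * s | r. \<forall>s. r s \<in> R})"
      using noeth by (simp add: left_noetherian_def)
    from this[rule_format, OF K_ideal[of i X]]
    show "\<exists>S. finite S \<and> S \<subseteq> K i X \<and> K i X = {\<Sum>s\<in>S. r s * s | r. \<forall>s. r s \<in> R}" .
  qed
  then have exS: "\<exists>S. finite S \<and> S \<subseteq> K i X \<and> K i X = {\<Sum>s\<in>S. r s * s | r. \<forall>s. r s \<in> R}" for i X
    by blast
  define S where "S i X = (SOME S. finite S \<and> S \<subseteq> K i X \<and> K i X = {\<Sum>s\<in>S. r s * s | r. \<forall>s. r s \<in> R})" for i X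
  have Sp': "finite (S i X) \<and> S i X \<subseteq> K i X \<and> K i X = {\<Sum>s\<in>S i X. r s * s | r. \<forall>s. r s \<in> R}" for i X
    unfolding S_def by (rule someI_ex[OF exS])
  have S: "\<And>i X. finite (S i X)" "\<And>i X. S i X \<subseteq> K i X"
      "\<And>i X. K i X = {\<Sum>s\<in>S i X. r s * s | r. \<forall>s. r s \<in> R}"
    using Sp' by blast+
  have SR: "s \<in> R" if "s \<in> S i X" for i X s using S(2) that by (auto simp: K_def)
  define gen where "gen i X s = (SOME g. g \<in> M \<and> g \<noteq> (\<lambda>_. 0) \<and> lmv g = (X, i) \<and> lcv g = sp X s)" for i X s
  have gen: "gen i X s \<in> M \<and> gen i X s \<noteq> (\<lambda>_. 0) \<and> lmv (gen i X s) = (X, i) \<and> lcv (gen i X s) = sp X s"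
    if "s \<in> S i X" "s \<noteq> 0" for i X s
  proof -
    have "sp X s \<in> J (X, i)" using S(2) that(1) by (auto simp: K_def)
    moreover have "sp X s \<noteq> 0" using sp_nz SR[OF that(1)] that(2) by blast
    ultimately have "\<exists>g. g \<in> M \<and> g \<noteq> (\<lambda>_. 0) \<and> lmv g = (X, i) \<and> lcv g = sp X s"
      using J_cases by blast
    then show ?thesis unfolding gen_def by (rule someI_ex)
  qed
  define T where "T = (SIGMA i:{..<m}. SIGMA X:F i. S i X - {0})"
  have Tfin: "finite T" unfolding T_def using F(1) S(1) by (intro finite_SigmaI) auto
  define G where "G = (\<lambda>(i, X, s). gen i X s) ` T \<union> {f0}"
  have GM: "G \<subseteq> M - {\<lambda>_. 0}" unfolding G_def T_def using gen f0 by auto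
  have red: "reducible R x n m lem G f" if f: "f \<in> M" "f \<noteq> (\<lambda>_. 0)" for f
  proof -
    have fv: "f \<in> vecs m" using M_vecs f(1) .
    obtain \<alpha> i where lmf: "lmv f = (\<alpha>, i)" by fastforce
    have ai: "\<alpha> \<in> exps n" "i < m" using lmv_mons[OF fv f(2)] lmf by (auto simp: mons_def)
    have lcJ: "lcv f \<in> J (\<alpha>, i)" using J_intro[OF f lmf] .
    obtain b0 where b0: "b0 \<in> R" "sp \<alpha> b0 = lcv f"
      using sp_bij[of \<alpha>] lcv_R[of f] unfolding bij_betw_def by (metis imageE)
    have "b0 \<in> K i \<alpha>" using b0 lcJ by (simp add: K_def)
    then have "b0 \<in> Sp (K i) (F i) \<alpha>" using F(3)[OF ai(1)] by blast
    then obtain kk where kk: "b0 = (\<Sum>X\<in>{X\<in>F i. \<forall>k. X k \<le> \<alpha> k}. kk X)" "\<forall>X\<in>F i. kk X \<in> K i X"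
      unfolding Sp_def by blast
    define FF where "FF = {X\<in>F i. \<forall>k. X k \<le> \<alpha> k}"
    have FFfin: "finite FF" using F(1) by (simp add: FF_def)
    have exr: "\<forall>X. \<exists>r. X \<in> F i \<longrightarrow> kk X = (\<Sum>s\<in>S i X. r s * s) \<and> (\<forall>s. r s \<in> R)"
    proof
      fix X
      show "\<exists>r. X \<in> F i \<longrightarrow> kk X = (\<Sum>s\<in>S i X. r s * s) \<and> (\<forall>s. r s \<in> R)"
      proof (cases "X \<in> F i")
        case True
        then have "kk X \<in> {\<Sum>s\<in>S i X. r s * s | r. \<forall>s. r s \<in> R}" using kk(2) S(3) by blast
        then show ?thesis by blast
      qed simp
    qed
    define rr where "rr X = (SOME r. X \<in> F i \<longrightarrow> kk X = (\<Sum>s\<in>S i X. r s * s) \<and> (\<forall>s. r s \<in> R))" for X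
    have rrp: "X \<in> F i \<longrightarrow> kk X = (\<Sum>s\<in>S i X. rr X s * s) \<and> (\<forall>s. rr X s \<in> R)" for X
      unfolding rr_def by (rule someI_ex[OF exr[rule_format, of X]])
    have rr1: "kk X = (\<Sum>s\<in>S i X. rr X s * s)" if "X \<in> F i" for X using rrp that by blast
    have rr2: "rr X s \<in> R" if "X \<in> F i" for X s using rrp that by blast
    define TT where "TT = (SIGMA X:FF. S i X - {0})"
    have TTfin: "finite TT" unfolding TT_def using FFfin S(1) by (intro finite_SigmaI) auto
    have TTp: "X \<in> F i" "dle X \<alpha>" "s \<in> S i X" "s \<noteq> 0" "X \<in> exps n" "s \<in> R" if "(X, s) \<in> TT" for X s
      using that F(2) SR unfolding TT_def FF_def dle_def by auto
    have "b0 = (\<Sum>X\<in>FF. \<Sum>s\<in>S i X - {0}. rr X s * s)"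
    proof -
      have "b0 = (\<Sum>X\<in>FF. \<Sum>s\<in>S i X. rr X s * s)" unfolding kk(1) FF_def
        by (rule sum.cong) (simp_all add: rr1)
      also have "\<dots> = (\<Sum>X\<in>FF. \<Sum>s\<in>S i X - {0}. rr X s * s)"
        by (rule sum.cong[OF refl], rule sum.mono_neutral_right[OF S(1)]) auto
      finally show ?thesis .
    qed
    also have "\<dots> = (\<Sum>(X, s)\<in>TT. rr X s * s)"
      unfolding TT_def using FFfin S(1) by (subst sum.Sigma) auto
    finally have b0s: "b0 = (\<Sum>(X, s)\<in>TT. rr X s * s)" .
    have "lcv f = (\<Sum>(X, s)\<in>TT. sp \<alpha> (rr X s * s))"
      unfolding b0(2)[symmetric] b0s
      using rhom_sum[OF sp_rhom TTfin, of "\<lambda>(X, s). rr X s * s"] TTp rr2 Rmult by (auto simp: case_prod_unfold)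
    define vv where "vv X = (SOME v. v \<in> R \<and> v * cab R x n (mi \<alpha> X) X = 1)" for X
    have vv: "vv X \<in> R \<and> vv X * cab R x n (mi \<alpha> X) X = 1" if "X \<in> exps n" "dle X \<alpha>" for X
    proof -
      have "mi \<alpha> X \<in> exps n" using ai(1) by (simp add: exps_def)
      then have "iu (cab R x n (mi \<alpha> X) X)" using cab_iu that(1) by blast
      then have "\<exists>v. v \<in> R \<and> v * cab R x n (mi \<alpha> X) X = 1" unfolding iu_def invertible_in_def by blast
      then show ?thesis unfolding vv_def by (rule someI_ex)
    qed
    define gi where "gi = (\<lambda>(X, s). gen i X s)"
    define coef where "coef = (\<lambda>(X, s). sp \<alpha> (rr X s) * vv X)"
    have trm: "sp \<alpha> (rr X s * s) = coef (X, s) * sp (mi \<alpha> X) (lcv (gi (X, s))) * cab R x n (mi \<alpha> X) X"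
      if "(X, s) \<in> TT" for X s
    proof -
      note p = TTp[OF that]
      let ?g = "mi \<alpha> X"
      let ?c = "cab R x n ?g X"
      have ge: "?g \<in> exps n" using ai(1) by (simp add: exps_def)
      have pa: "pl ?g X = \<alpha>" using pl_mi[OF p(2)] by (simp add: fun_eq_iff add.commute)
      have lc: "lcv (gi (X, s)) = sp X s" using gen[OF p(3,4)] by (simp add: gi_def)
      have "sp ?g (sp X s) * ?c = ?c * sp \<alpha> s" using sp_comp[OF ge p(5) p(6)] pa by simp
      then have "vv X * (sp ?g (sp X s) * ?c) = sp \<alpha> s"
        using vv[OF p(5) p(2)] by (simp add: mult.assoc[symmetric])
      then have "sp \<alpha> (rr X s * s) = sp \<alpha> (rr X s) * (vv X * (sp ?g (sp X s) * ?c))"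
        using rhom_mult[OF sp_rhom rr2[OF p(1)] p(6)] by simp
      then show ?thesis unfolding coef_def lc by (simp add: mult.assoc)
    qed
    have inj: "inj_on gi TT"
    proof (rule inj_onI)
      fix a b assume a: "a \<in> TT" and b: "b \<in> TT" and e: "gi a = gi b"
      obtain X s where as: "a = (X, s)" by fastforce
      obtain Y t where bs: "b = (Y, t)" by fastforce
      note pa = TTp[OF a[unfolded as]] and pb = TTp[OF b[unfolded bs]]
      have ga: "lmv (gi a) = (X, i)" "lcv (gi a) = sp X s" using gen[OF pa(3,4)] by (simp_all add: gi_def as)
      have gb: "lmv (gi b) = (Y, i)" "lcv (gi b) = sp Y t" using gen[OF pb(3,4)] by (simp_all add: gi_def bs)
      have "X = Y" using ga(1) gb(1) e by simp
      moreover have "sp X s = sp X t" using ga(2) gb(2) e \<open>X = Y\<close> by simp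
      then have "s = t" using sp_inj pa(6) pb(6) by blast
      ultimately show "a = b" using as bs by simp
    qed
    define F' where "F' = gi ` TT"
    define r where "r = (\<lambda>g. coef (inv_into TT gi g))"
    show ?thesis unfolding reducible_def
    proof (intro exI[of _ F'] exI[of _ r] conjI ballI)
      show "F' \<subseteq> G"
      proof
        fix g assume "g \<in> F'"
        then obtain X s where g: "(X, s) \<in> TT" "g = gi (X, s)" unfolding F'_def by auto
        note p = TTp[OF g(1)]
        have "(i, X, s) \<in> T" unfolding T_def using ai(2) p(1,3,4) by simp
        moreover have "g = (\<lambda>(i, X, s). gen i X s) (i, X, s)" using g(2) by (simp add: gi_def)
        ultimately show "g \<in> G" unfolding G_def by blast
      qed
      show "finite F'" unfolding F'_def using TTfin by simp
    next
      fix g assume "g \<in> F'"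
      then obtain X s where g: "(X, s) \<in> TT" "g = gi (X, s)" unfolding F'_def by auto
      note p = TTp[OF g(1)]
      have "r g = coef (X, s)" unfolding r_def g(2) using inv_into_f_f[OF inj g(1)] by simp
      then show "r g \<in> R" unfolding coef_def using Rmult sp_R rr2[OF p(1)] vv[OF p(5) p(2)] by simp
      have "lmv g = (X, i)" using gen[OF p(3,4)] g(2) by (simp add: gi_def)
      then show "mdivides (lmv g) (lmv f)" using lmf p(2) by (simp add: mdivides_def dle_def)
    next
      have "lcv f = (\<Sum>(X, s)\<in>TT. coef (X, s) * sp (mi \<alpha> X) (lcv (gi (X, s))) * cab R x n (mi \<alpha> X) X)"
        unfolding \<open>lcv f = _\<close> by (rule sum.cong) (auto simp: trm)
      also have "\<dots> = (\<Sum>t\<in>TT. (let \<beta> = fst (lmv (gi t)); \<alpha>' = (\<lambda>k. fst (lmv f) k - \<beta> k)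
                   in r (gi t) * sigma_pow R x n \<alpha>' (lcv (gi t)) * cab R x n \<alpha>' \<beta>))"
      proof (rule sum.cong)
        fix t assume t: "t \<in> TT"
        obtain X s where ts: "t = (X, s)" by fastforce
        note p = TTp[OF t[unfolded ts]]
        have lmg: "lmv (gi t) = (X, i)" using gen[OF p(3,4)] by (simp add: gi_def ts)
        have "r (gi t) = coef t" unfolding r_def using inv_into_f_f[OF inj t] by simp
        then show "(case t of (X, s) \<Rightarrow> coef (X, s) * sp (mi \<alpha> X) (lcv (gi (X, s))) * cab R x n (mi \<alpha> X) X) =
          (let \<beta> = fst (lmv (gi t)); \<alpha>' = (\<lambda>k. fst (lmv f) k - \<beta> k)
                   in r (gi t) * sigma_pow R x n \<alpha>' (lcv (gi t)) * cab R x n \<alpha>' \<beta>)"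
          using lmg lmf ts by (simp add: Let_def)
      qed simp
      also have "\<dots> = (\<Sum>g\<in>F'. (let \<beta> = fst (lmv g); \<alpha>' = (\<lambda>k. fst (lmv f) k - \<beta> k)
                   in r g * sigma_pow R x n \<alpha>' (lcv g) * cab R x n \<alpha>' \<beta>))"
        unfolding F'_def by (rule sum.reindex[OF inj, symmetric, unfolded comp_def])
      finally show "lcv f = (\<Sum>g\<in>F'. (let \<beta> = fst (lmv g); \<alpha>' = (\<lambda>k. fst (lmv f) k - \<beta> k)
                   in r g * sigma_pow R x n \<alpha>' (lcv g) * cab R x n \<alpha>' \<beta>))" .
    qed
  qed
  have "groebner_basis R x n m lem M G"
    unfolding groebner_basis_def using Mnz GM red Tfin by (simp add: G_def)
  then show ?thesis by blast
qed

end

theorem corollary32: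
  fixes R :: "'a::ring_1 set" and x :: "nat \<Rightarrow> 'a" and n m :: nat
    and le :: "expo \<Rightarrow> expo \<Rightarrow> bool"
    and lem :: "expo \<times> nat \<Rightarrow> expo \<times> nat \<Rightarrow> bool"
    and M :: "(nat \<Rightarrow> 'a) set"
  assumes "sigma_PBW R x n"
    and "quasi_commutative R x n"
    and "bijective_ext R x n"
    and "left_noetherian R"
    and "monomial_order_A R x n le"
    and "monomial_order_Am R x n le m lem"
    and "submodule m M"
  shows "\<exists>G. groebner_basis R x n m lem M G"
proof (cases "(1::'a) = 0")
  case True
  have all0: "f = (\<lambda>_. 0)" for f :: "nat \<Rightarrow> 'a"
  proof
    fix i
    have "f i = f i * 1" by simp
    then show "f i = 0" using True by simp
  qed
  have "(\<lambda>_. 0) \<in> M" using assms(7) by (simp add: submodule_def)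
  then have "M = {\<lambda>_. 0}" using all0 by blast
  then show ?thesis unfolding groebner_basis_def by simp
next
  case False
  interpret qcm R x n m le lem M
    by unfold_locales (use assms False in auto)
  show ?thesis using gb_exists[OF assms(4)] .
qed

end
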